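(* Let $e_1,e_2,e_3$ be nonzero integers with $e_1+e_2+e_3=0$, $e_1,e_2$ odd and $2\,\|\,e_3$. Let $n$ be an odd positive square-free integer and $\Lambda=(d_1,d_2,d_3)$ with $d_1,d_2,d_3$ odd square-free divisors of $e_1e_2e_3n$ and $d_1d_2d_3$ a square. If $D^{(n)}_\Lambda(\mathbb{Q}_v)\neq\emptyset$ for every place $v\neq 2$ of $\mathbb{Q}$, then also $D^{(n)}_\Lambda(\mathbb{Q}_2)\ne\emptyset$.
   Context: $D^{(n)}_\Lambda\subset\mathbb{P}^3$ (coordinates $(t,u_1,u_2,u_3)$) is defined by $e_1nt^2+d_2u_2^2-d_3u_3^2=0$, $e_2nt^2+d_3u_3^2-d_1u_1^2=0$, $e_3nt^2+d_1u_1^2-d_2u_2^2=0$. $2\,\|\,m$ means $2\mid m$, $4\nmid m$. *)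

theory Defs
  imports Complex_Main "HOL-Computational_Algebra.Squarefree" "HOL-Number_Theory.Cong"
begin

definition D_eq1 :: "int \<Rightarrow> int \<Rightarrow> int \<Rightarrow> int \<Rightarrow> int \<Rightarrow> int \<Rightarrow> int \<Rightarrow> 'a::comm_ring_1 \<Rightarrow> 'a \<Rightarrow> 'a \<Rightarrow> 'a \<Rightarrow> 'a" where
  "D_eq1 e1 e2 e3 n d1 d2 d3 t u1 u2 u3 =
     of_int (e1 * n) * t^2 + of_int d2 * u2^2 - of_int d3 * u3^2"

definition D_eq2 :: "int \<Rightarrow> int \<Rightarrow> int \<Rightarrow> int \<Rightarrow> int \<Rightarrow> int \<Rightarrow> int \<Rightarrow> 'a::comm_ring_1 \<Rightarrow> 'a \<Rightarrow> 'a \<Rightarrow> 'a \<Rightarrow> 'a" where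
  "D_eq2 e1 e2 e3 n d1 d2 d3 t u1 u2 u3 =
     of_int (e2 * n) * t^2 + of_int d3 * u3^2 - of_int d1 * u1^2"

definition D_eq3 :: "int \<Rightarrow> int \<Rightarrow> int \<Rightarrow> int \<Rightarrow> int \<Rightarrow> int \<Rightarrow> int \<Rightarrow> 'a::comm_ring_1 \<Rightarrow> 'a \<Rightarrow> 'a \<Rightarrow> 'a \<Rightarrow> 'a" where
  "D_eq3 e1 e2 e3 n d1 d2 d3 t u1 u2 u3 =
     of_int (e3 * n) * t^2 + of_int d1 * u1^2 - of_int d2 * u2^2"

definition D_has_real_point :: "int \<Rightarrow> int \<Rightarrow> int \<Rightarrow> int \<Rightarrow> int \<Rightarrow> int \<Rightarrow> int \<Rightarrow> bool" where
  "D_has_real_point e1 e2 e3 n d1 d2 d3 \<longleftrightarrow>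
     (\<exists>t u1 u2 u3 :: real. (t, u1, u2, u3) \<noteq> (0, 0, 0, 0) \<and>
        D_eq1 e1 e2 e3 n d1 d2 d3 t u1 u2 u3 = 0 \<and>
        D_eq2 e1 e2 e3 n d1 d2 d3 t u1 u2 u3 = 0 \<and>
        D_eq3 e1 e2 e3 n d1 d2 d3 t u1 u2 u3 = 0)"

text \<open>A point of P^3(Q_p) is represented by a primitive vector in Z_p^4;
  Z_p is realised as the inverse limit of Z/p^k, i.e. by sequences of integers
  x k with x (k+1) \<equiv> x k (mod p^k).  The equations hold in Z_p iff they hold mod p^k
  for every k; primitivity means not all coordinates are divisible by p.\<close>

definition padic_int_seq :: "int \<Rightarrow> (nat \<Rightarrow> int) \<Rightarrow> bool" where
  "padic_int_seq p x \<longleftrightarrow> (\<forall>k. [x (Suc k) = x k] (mod p ^ k))"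

definition D_has_padic_point :: "int \<Rightarrow> int \<Rightarrow> int \<Rightarrow> int \<Rightarrow> int \<Rightarrow> int \<Rightarrow> int \<Rightarrow> int \<Rightarrow> bool" where
  "D_has_padic_point p e1 e2 e3 n d1 d2 d3 \<longleftrightarrow>
     (\<exists>t u1 u2 u3 :: nat \<Rightarrow> int.
        padic_int_seq p t \<and> padic_int_seq p u1 \<and> padic_int_seq p u2 \<and> padic_int_seq p u3 \<and>
        \<not> (p dvd t 1 \<and> p dvd u1 1 \<and> p dvd u2 1 \<and> p dvd u3 1) \<and>
        (\<forall>k. [D_eq1 e1 e2 e3 n d1 d2 d3 (t k) (u1 k) (u2 k) (u3 k) = 0] (mod p ^ k) \<and>
             [D_eq2 e1 e2 e3 n d1 d2 d3 (t k) (u1 k) (u2 k) (u3 k) = 0] (mod p ^ k) \<and>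
             [D_eq3 e1 e2 e3 n d1 d2 d3 (t k) (u1 k) (u2 k) (u3 k) = 0] (mod p ^ k)))"

end

theory Submission
  imports Defs
begin

fun hroot :: "int \<Rightarrow> int \<Rightarrow> nat \<Rightarrow> int" where
  "hroot d m 0 = 1"
| "hroot d m (Suc k) = (let v = hroot d m k in
     if 2^(k+4) dvd (d * v^2 - m) then v else v + 2^(k+2))"

lemma hroot_inv:
  assumes "odd d" "8 dvd (d - m)"
  shows "odd (hroot d m k) \<and> 2^(k+3) dvd (d * (hroot d m k)^2 - m)"
proof (induction k)
  case 0 then show ?case using assms by simp
next
  case (Suc k)
  define v where "v = hroot d m k"
  have ov: "odd v" and dv: "2^(k+3) dvd (d*v^2 - m)" using Suc v_def by auto
  show ?case
  proof (cases "2^(k+4) dvd (d * v^2 - m)")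
    case True then show ?thesis using ov by (simp add: v_def[symmetric] Let_def add.commute)
  next
    case False
    obtain q where q: "d*v^2 - m = 2^(k+3) * q" using dv by blast
    have oq: "odd q"
    proof
      assume "even q" then obtain q' where "q = 2*q'" by blast
      then have "d*v^2 - m = 2^(k+4)*q'" using q by (simp add: power_add)
      then show False using False by simp
    qed
    have e: "d*(v + 2^(k+2))^2 - m = 2^(k+3) * (q + d*v + d * 2^(k+1))"
      using q by (simp add: power2_eq_square algebra_simps power_add)
    have "even (q + d*v + d * 2^(k+1))" using oq ov assms(1) by simp
    then obtain w where "q + d*v + d * 2^(k+1) = 2*w" by blast
    then have "d*(v + 2^(k+2))^2 - m = 2^(k+4) * w" using e by (simp add: power_add)
    then show ?thesis using False ov by (simp add: v_def[symmetric] Let_def add.commute power_add)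
  qed
qed

lemma hroot_step: "[hroot d m (Suc k) = hroot d m k] (mod 2^k)"
proof -
  have "(2::int)^k dvd 2^(k+2)" by (simp add: le_imp_power_dvd)
  then show ?thesis by (auto simp: Let_def cong_iff_dvd_diff)
qed

lemma sqrt2_seq:
  assumes "odd d" "8 dvd (d - m)"
  shows "\<exists>u. padic_int_seq 2 u \<and> (\<forall>k. [d * (u k)^2 = m] (mod 2^k))"
proof (intro exI conjI allI)
  show "padic_int_seq 2 (hroot d m)" unfolding padic_int_seq_def using hroot_step by blast
  fix k
  have "2^(k+3) dvd (d * (hroot d m k)^2 - m)" using hroot_inv[OF assms] by blast
  moreover have "(2::int)^k dvd 2^(k+3)" by (simp add: le_imp_power_dvd)
  ultimately show "[d * (hroot d m k)^2 = m] (mod 2^k)"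
    by (meson cong_iff_dvd_diff dvd_trans)
qed

lemma construct2:
  fixes e1 e2 e3 n d1 d2 d3 T UU Ma Mb :: int
  assumes "odd d1" "odd d2" "8 dvd (d1 - Ma)" "8 dvd (d2 - Mb)"
    and i1: "e1*n*T^2 + Mb - d3*UU^2 = 0"
    and i2: "e2*n*T^2 + d3*UU^2 - Ma = 0"
    and i3: "e3*n*T^2 + Ma - Mb = 0"
    and prim: "odd T \<or> odd UU"
  shows "D_has_padic_point 2 e1 e2 e3 n d1 d2 d3"
proof -
  obtain u1 where u1: "padic_int_seq 2 u1" "\<And>k. [d1 * (u1 k)^2 = Ma] (mod 2^k)"
    using sqrt2_seq[OF assms(1,3)] by blast
  obtain u2 where u2: "padic_int_seq 2 u2" "\<And>k. [d2 * (u2 k)^2 = Mb] (mod 2^k)"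
    using sqrt2_seq[OF assms(2,4)] by blast
  have c: "padic_int_seq 2 (\<lambda>_. x)" for x unfolding padic_int_seq_def by simp
  show ?thesis unfolding D_has_padic_point_def
  proof (rule exI[of _ "\<lambda>_. T"], rule exI[of _ u1], rule exI[of _ u2], rule exI[of _ "\<lambda>_. UU"],
      intro conjI allI)
    show "\<not> (2 dvd T \<and> 2 dvd u1 1 \<and> 2 dvd u2 1 \<and> 2 dvd UU)" using prim by auto
    fix k
    have h1: "[d1 * (u1 k)^2 - Ma = 0] (mod 2^k)" "[d2 * (u2 k)^2 - Mb = 0] (mod 2^k)"
      using u1(2)[of k] u2(2)[of k] by (simp_all add: cong_iff_dvd_diff)
    have "D_eq1 e1 e2 e3 n d1 d2 d3 T (u1 k) (u2 k) UU = (d2 * (u2 k)^2 - Mb)"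
      using i1 unfolding D_eq1_def by (simp add: algebra_simps)
    then show "[D_eq1 e1 e2 e3 n d1 d2 d3 T (u1 k) (u2 k) UU = 0] (mod 2^k)" using h1 by simp
    have "D_eq2 e1 e2 e3 n d1 d2 d3 T (u1 k) (u2 k) UU = - (d1 * (u1 k)^2 - Ma)"
      using i2 unfolding D_eq2_def by (simp add: algebra_simps)
    then show "[D_eq2 e1 e2 e3 n d1 d2 d3 T (u1 k) (u2 k) UU = 0] (mod 2^k)" using h1
      by (simp add: cong_0_iff dvd_diff_commute)
    have "D_eq3 e1 e2 e3 n d1 d2 d3 T (u1 k) (u2 k) UU = (d1 * (u1 k)^2 - Ma) - (d2 * (u2 k)^2 - Mb)"
      using i3 unfolding D_eq3_def by (simp add: algebra_simps)
    then show "[D_eq3 e1 e2 e3 n d1 d2 d3 T (u1 k) (u2 k) UU = 0] (mod 2^k)" using h1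
      by (simp add: cong_0_iff dvd_diff)
  qed (use u1 u2 c in auto)
qed

lemma P1_point:
  fixes e1 e2 e3 n d1 d2 d3 :: int
  assumes "odd d1" "odd d2" "odd (e1*n)" "odd (e2*n)" "e1*n + e2*n + e3*n = 0"
    "8 dvd (d1 - d2)" "4 dvd (d3 - d1)"
  shows "D_has_padic_point 2 e1 e2 e3 n d1 d2 d3"
proof (cases "8 dvd (d3 - d2)")
  case True
  have "8 dvd (d1 - d3)" "8 dvd (d2 - d3)" using True assms by presburger+
  then show ?thesis
    by (intro construct2[where T=0 and UU=1 and Ma=d3 and Mb=d3]) (use assms True in \<open>auto simp: dvd_diff_commute\<close>)
next
  case False
  define a where "a = e1*n"
  define b where "b = e2*n"
  have a: "odd a" "odd b" using assms a_def b_def by auto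
  have "8 dvd (d1 - (d3 + 4*b))" using a assms False by presburger
  moreover have "8 dvd (d2 - (d3 - 4*a))" using a assms False by presburger
  moreover have "e3*n = - a - b" using assms a_def b_def by simp
  ultimately show ?thesis
    by (intro construct2[where T=2 and UU=1 and Ma="d3 + 4*b" and Mb="d3 - 4*a"])
       (use assms in \<open>auto simp: a_def b_def algebra_simps\<close>)
qed

lemma P2_point:
  fixes e1 e2 e3 n d1 d2 d3 :: int
  assumes "odd d1" "odd d2" "odd d3" "odd (e1*n)" "odd (e2*n)" "e1*n + e2*n + e3*n = 0"
    "8 dvd (d2 + e1*n - d1 + e2*n)" "4 dvd (d2 + e1*n)"
  shows "D_has_padic_point 2 e1 e2 e3 n d1 d2 d3"
proof -
  define a where "a = e1*n"
  define b where "b = e2*n"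
  have a: "odd a" "odd b" using assms a_def b_def by auto
  have c: "e3*n = - a - b" using assms a_def b_def by simp
  show ?thesis
  proof (cases "8 dvd (d2 + a)")
    case True
    have "8 dvd (d1 - b)" "8 dvd (d2 - (- a))" using True assms a_def b_def by presburger+
    then show ?thesis
      by (intro construct2[where T=1 and UU=0 and Ma="b" and Mb="- a"])
         (use assms c in \<open>auto simp: a_def b_def algebra_simps\<close>)
  next
    case False
    have "8 dvd (d1 - (4*d3 + b))" "8 dvd (d2 - (4*d3 - a))"
      using False assms a_def b_def by presburger+
    then show ?thesis
      by (intro construct2[where T=1 and UU=2 and Ma="4*d3 + b" and Mb="4*d3 - a"])
         (use assms c in \<open>auto simp: a_def b_def algebra_simps\<close>)
  qed
qed

lemma prim_sol:
  fixes A B C :: int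
  assumes "(x,y,z) \<noteq> (0,0,0)" "A*x^2 + B*y^2 + C*z^2 = 0"
  shows "\<exists>x y z. \<not>(even x \<and> even y \<and> even z) \<and> A*x^2 + B*y^2 + C*z^2 = 0"
  using assms
proof (induction "nat (\<bar>x\<bar> + \<bar>y\<bar> + \<bar>z\<bar>)" arbitrary: x y z rule: less_induct)
  case less
  show ?case
  proof (cases "even x \<and> even y \<and> even z")
    case False then show ?thesis using less.prems by blast
  next
    case True
    then obtain x' y' z' where e: "x = 2*x'" "y = 2*y'" "z = 2*z'" by (meson evenE)
    have "4*(A*x'^2 + B*y'^2 + C*z'^2) = 0" using less.prems(2) e by (simp add: power2_eq_square algebra_simps)
    then have q: "A*x'^2 + B*y'^2 + C*z'^2 = 0" by simp
    have nz: "(x',y',z') \<noteq> (0,0,0)" using less.prems(1) e by auto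
    have "nat (\<bar>x'\<bar> + \<bar>y'\<bar> + \<bar>z'\<bar>) < nat (\<bar>x\<bar> + \<bar>y\<bar> + \<bar>z\<bar>)"
      using nz e by auto
    then show ?thesis using less.hyps[OF _ nz q] by blast
  qed
qed

lemma sq_odd8: "odd (x::int) \<Longrightarrow> 8 dvd (x^2 - 1)"
proof -
  assume "odd x"
  then obtain k where k: "x = 2*k+1" by (meson oddE)
  have "even (k*(k+1))" by simp
  then obtain m where "k*(k+1) = 2*m" by (meson evenE)
  then have "x^2 - 1 = 8*m" using k by (simp add: power2_eq_square algebra_simps)
  then show ?thesis by simp
qed

lemma sq_even4: "even (x::int) \<Longrightarrow> 4 dvd x^2"
proof -
  assume "even x"
  then obtain k where "x = 2*k" by (meson evenE)
  then have "x^2 = 4*(k^2)" by (simp add: power2_eq_square)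
  then show ?thesis by simp
qed

lemma lin_odd:
  fixes A B C X Y Z sx sy sz :: int
  assumes "X + Y + Z = 0" "odd A" "odd B" "odd C"
    "4 dvd (X - A*sx)" "4 dvd (Y - B*sy)" "4 dvd (Z - C*sz)"
    "sx \<in> {0,1}" "sy \<in> {0,1}" "sz \<in> {0,1}" "sx + sy + sz \<noteq> 0"
  shows "4 dvd (A + B) \<or> 4 dvd (B + C) \<or> 4 dvd (A + C)"
  using assms by (auto; presburger)

lemma conic_odd:
  fixes A B C :: int
  assumes "odd A" "odd B" "odd C" "(x,y,z) \<noteq> (0,0,0)" "A*x^2 + B*y^2 + C*z^2 = 0"
  shows "4 dvd (A + B) \<or> 4 dvd (B + C) \<or> 4 dvd (A + C)"
proof -
  obtain x y z where p: "\<not>(even x \<and> even y \<and> even z)" "A*x^2 + B*y^2 + C*z^2 = 0"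
    using prim_sol[OF assms(4,5)] by blast
  define s :: "int \<Rightarrow> int" where "s v = (if odd v then 1 else 0)" for v
  have h: "4 dvd (v^2 - s v)" for v
  proof (cases "odd v")
    case True then show ?thesis using sq_odd8[of v] s_def by (simp add: dvd_trans[of 4 8])
  next
    case False then show ?thesis using sq_even4[of v] s_def by simp
  qed
  have d: "4 dvd (K*v^2 - K * s v)" for K v :: int
    using dvd_mult[OF h[of v], of K] by (simp add: algebra_simps)
  show ?thesis
    by (rule lin_odd[where sx="s x" and sy="s y" and sz="s z", OF p(2) assms(1-3) d d d]) (use p(1) in \<open>auto simp: s_def\<close>)
qed

lemma lin_even:
  fixes A B C X Y Z :: int
  assumes "X + Y + Z = 0" "odd A" "odd B" "C mod 4 = 2"
    "odd x \<Longrightarrow> 8 dvd (X - A)" "even x \<Longrightarrow> 4 dvd X"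
    "odd y \<Longrightarrow> 8 dvd (Y - B)" "even y \<Longrightarrow> 4 dvd Y"
    "odd z \<Longrightarrow> 8 dvd (Z - C)" "even z \<Longrightarrow> 8 dvd Z"
    "\<not>(even x \<and> even y \<and> even z)"
  shows "8 dvd (A + B) \<or> 8 dvd (A + B + C)"
  using assms by (cases "odd x"; cases "odd y"; cases "odd z"; simp; presburger)

lemma conic_even:
  fixes A B C :: int
  assumes "odd A" "odd B" "C mod 4 = 2" "(x,y,z) \<noteq> (0,0,0)" "A*x^2 + B*y^2 + C*z^2 = 0"
  shows "8 dvd (A + B) \<or> 8 dvd (A + B + C)"
proof -
  obtain x y z where p: "\<not>(even x \<and> even y \<and> even z)" "A*x^2 + B*y^2 + C*z^2 = 0"
    using prim_sol[OF assms(4,5)] by blast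
  have o: "8 dvd (K*v^2 - K)" if "odd v" for K v :: int
    using dvd_mult[OF sq_odd8[OF that], of K] by (simp add: algebra_simps)
  have e: "4 dvd (K*v^2)" if "even v" for K v :: int
    using sq_even4[OF that] by simp
  have ce: "8 dvd (C*v^2)" if ev: "even v" for v :: int
  proof -
    have "even C" using assms(3) by presburger
    then obtain c where "C = 2*c" by (meson evenE)
    moreover obtain w where "v^2 = 4*w" using sq_even4[OF ev] by (meson dvdE)
    ultimately have "C*v^2 = 8*(c*w)" by simp
    then show ?thesis by simp
  qed
  show ?thesis
    by (rule lin_even[OF p(2) assms(1-3), of x y z]) (use o e ce p(1) in auto)
qed

lemma comb_res:
  fixes r1 r2 r3 ra rb :: int
  assumes "r1 \<in> {1,3,5,7}" "r2 \<in> {1,3,5,7}" "r3 \<in> {1,3,5,7}" "odd ra" "odd rb"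
    "(r1*r2*r3) mod 8 = 1" "\<not> 4 dvd (ra + rb)"
    "4 dvd (r2 - r3) \<or> 4 dvd (ra + r2) \<or> 4 dvd (ra - r3)"
    "4 dvd (r3 - r1) \<or> 4 dvd (rb + r3) \<or> 4 dvd (rb - r1)"
    "8 dvd (r1 - r2) \<or> 8 dvd (r1 - r2 - ra - rb)"
  shows "(8 dvd (r1 - r2) \<and> 4 dvd (r3 - r1)) \<or> (8 dvd (r2 + ra - r1 + rb) \<and> 4 dvd (r2 + ra))"
  using assms(4-10)
  apply -
  apply (insert assms(1-3))
  apply (elim insertE emptyE; simp)
  apply presburger+
  done



lemma odd_res_aux: "odd (x::int) \<Longrightarrow> 0 \<le> x \<Longrightarrow> x < 8 \<Longrightarrow> x = 1 \<or> x = 3 \<or> x = 5 \<or> x = 7"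
  by presburger

lemma odd_res8: "odd (d::int) \<Longrightarrow> d mod 8 \<in> {1,3,5,7}"
proof -
  assume "odd d"
  then have "odd (d mod 8)" by (simp add: odd_iff_mod_2_eq_one mod_mod_cancel)
  moreover have "0 \<le> d mod 8" "d mod 8 < 8" by auto
  ultimately have "d mod 8 = 1 \<or> d mod 8 = 3 \<or> d mod 8 = 5 \<or> d mod 8 = 7"
    by (metis (no_types) odd_res_aux)
  then show ?thesis by auto
qed

lemma dvd_shift: "(k::int) dvd (x - y) \<Longrightarrow> (k dvd x \<longleftrightarrow> k dvd y)"
  by (metis diff_add_cancel dvd_add_right_iff dvd_diff)

lemma comb:
  fixes d1 d2 d3 a b :: int
  assumes "odd d1" "odd d2" "odd d3" "odd a" "odd b"
    "(d1*d2*d3) mod 8 = 1" "\<not> 4 dvd (a + b)"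
    "4 dvd (d2 - d3) \<or> 4 dvd (a + d2) \<or> 4 dvd (a - d3)"
    "4 dvd (d3 - d1) \<or> 4 dvd (b + d3) \<or> 4 dvd (b - d1)"
    "8 dvd (d1 - d2) \<or> 8 dvd (d1 - d2 - a - b)"
  shows "(8 dvd (d1 - d2) \<and> 4 dvd (d3 - d1)) \<or> (8 dvd (d2 + a - d1 + b) \<and> 4 dvd (d2 + a))"
proof -
  define r1 where "r1 = d1 mod 8"
  define r2 where "r2 = d2 mod 8"
  define r3 where "r3 = d3 mod 8"
  have "8 dvd (d1 - r1)" "8 dvd (d2 - r2)" "8 dvd (d3 - r3)"
    by (simp_all add: r1_def r2_def r3_def mod_eq_dvd_iff[symmetric])
  then obtain q1 q2 q3 where q: "d1 - r1 = 8*q1" "d2 - r2 = 8*q2" "d3 - r3 = 8*q3"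
    by (meson dvdE)
  have "[r1*r2*r3 = d1*d2*d3] (mod 8)"
    by (intro cong_mult) (simp_all add: r1_def r2_def r3_def cong_def)
  then have pr: "(r1*r2*r3) mod 8 = 1" using assms(6) by (simp add: cong_def)
  have t8: "8 dvd X \<longleftrightarrow> 8 dvd Y" if "X - Y = 8*z" for X Y z :: int
    using dvd_shift[of 8 X Y] that by simp
  have t4: "4 dvd X \<longleftrightarrow> 4 dvd Y" if "X - Y = 8*z" for X Y z :: int
  proof -
    have "X - Y = 4*(2*z)" using that by simp
    then show ?thesis using dvd_shift[of 4 X Y] by (metis dvd_triv_left)
  qed
  have h8: "4 dvd (r2 - r3) \<or> 4 dvd (a + r2) \<or> 4 dvd (a - r3)"
    using assms(8) t4[of "d2 - d3" "r2 - r3" "q2 - q3"] t4[of "a + d2" "a + r2" "q2"]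
      t4[of "a - d3" "a - r3" "- q3"] q by (auto simp: algebra_simps)
  have h9: "4 dvd (r3 - r1) \<or> 4 dvd (b + r3) \<or> 4 dvd (b - r1)"
    using assms(9) t4[of "d3 - d1" "r3 - r1" "q3 - q1"] t4[of "b + d3" "b + r3" "q3"]
      t4[of "b - d1" "b - r1" "- q1"] q by (auto simp: algebra_simps)
  have h10: "8 dvd (r1 - r2) \<or> 8 dvd (r1 - r2 - a - b)"
    using assms(10) t8[of "d1 - d2" "r1 - r2" "q1 - q2"] t8[of "d1 - d2 - a - b" "r1 - r2 - a - b" "q1 - q2"]
      q by (auto simp: algebra_simps)
  have "(8 dvd (r1 - r2) \<and> 4 dvd (r3 - r1)) \<or> (8 dvd (r2 + a - r1 + b) \<and> 4 dvd (r2 + a))"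
    by (rule comb_res[OF _ _ _ assms(4,5) pr assms(7) h8 h9 h10])
       (use assms odd_res8 in \<open>auto simp: r1_def r2_def r3_def\<close>)
  then show ?thesis
    using t8[of "d1 - d2" "r1 - r2" "q1 - q2"] t4[of "d3 - d1" "r3 - r1" "q3 - q1"]
      t8[of "d2 + a - d1 + b" "r2 + a - r1 + b" "q2 - q1"] t4[of "d2 + a" "r2 + a" "q2"] q
    by (auto simp: algebra_simps)
qed

lemma isqrt_ex: "\<exists>s::nat. s^2 \<le> N \<and> N < (s+1)^2"
proof (induction N)
  case 0 then show ?case by (intro exI[of _ 0]) simp
next
  case (Suc N)
  then obtain s where s: "s^2 \<le> N" "N < (s+1)^2" by blast
  show ?case
  proof (cases "Suc N < (s+1)^2")
    case True then show ?thesis using s by (intro exI[of _ s]) simp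
  next
    case False
    then have "Suc N = (s+1)^2" using s by simp
    moreover have "(s+1)^2 < (s+2)^2" by (simp add: power_strict_mono)
    ultimately show ?thesis by (intro exI[of _ "s+1"]) simp
  qed
qed

lemma isqrt_int: "(N::int) \<ge> 0 \<Longrightarrow> \<exists>s::int. s \<ge> 0 \<and> s^2 \<le> N \<and> N < (s+1)^2"
proof -
  assume "N \<ge> 0"
  obtain s :: nat where s: "s^2 \<le> nat N" "nat N < (s+1)^2" using isqrt_ex by blast
  have "int (s^2) \<le> N" using s(1) \<open>N \<ge> 0\<close> by linarith
  moreover have "N < int ((s+1)^2)" using s(2) \<open>N \<ge> 0\<close> by linarith
  ultimately show ?thesis by (intro exI[of _ "int s"]) (simp add: add.commute)
qed

lemma pigeon:
  assumes "finite S" "finite T" "f ` S \<subseteq> T" "card T < card S"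
  shows "\<exists>a\<in>S. \<exists>b\<in>S. a \<noteq> b \<and> f a = f b"
proof (rule ccontr)
  assume "\<not> ?thesis"
  then have "inj_on f S" unfolding inj_on_def by blast
  then have "card S \<le> card T" using card_inj_on_le assms by blast
  then show False using assms by simp
qed

lemma sqfree_not_sq:
  fixes m x :: int
  assumes "squarefree m" "m > 1" shows "x^2 \<noteq> m"
proof
  assume h: "x^2 = m"
  then have "x dvd 1" using squarefreeD[OF assms(1), of x] by simp
  then have "x^2 = 1" by (metis dvd_mult_cancel1 h assms(2) is_unit_power_iff power2_eq_square zdvd1_eq abs_mult_self_eq abs_of_nonneg nat_1 one_power2)
  then show False using h assms by simp
qed

lemma sq_le_abs: "\<bar>x::int\<bar> \<le> s \<Longrightarrow> x^2 \<le> s^2"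
  by (metis abs_le_square_iff abs_of_nonneg abs_ge_zero order_trans)

lemma box_diff:
  fixes a b s :: int
  assumes "a \<in> {0..s}" "b \<in> {0..s}"
  shows "(a - b)^2 \<le> s^2"
  using assms by (intro sq_le_abs) auto

lemma two_sq:
  fixes c t :: int
  assumes "c > 0" "squarefree c" "c dvd (t^2 + 1)"
  shows "\<exists>x y. x^2 + y^2 = c"
proof (cases "c = 1")
  case True then show ?thesis by (intro exI[of _ 1] exI[of _ 0]) simp
next
  case False
  then have c1: "c > 1" using assms by simp
  obtain s where s: "s \<ge> 0" "s^2 \<le> c" "c < (s+1)^2" using isqrt_int[of c] assms by auto
  define S where "S = {0..s} \<times> {0..s}"
  define f where "f = (\<lambda>(x::int,y::int). (x - t*y) mod c)"
  have cS: "card S = nat ((s+1)^2)" unfolding S_def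
    by (simp add: card_cartesian_product power2_eq_square nat_mult_distrib s(1))
  have "f ` S \<subseteq> {0..<c}" unfolding f_def using assms(1) by auto
  moreover have "card {0..<c} < card S" using cS s by simp
  ultimately obtain p q where pq: "p \<in> S" "q \<in> S" "p \<noteq> q" "f p = f q"
    using pigeon[of S "{0..<c}" f] unfolding S_def by auto
  obtain x1 y1 x2 y2 where pq': "p = (x1,y1)" "q = (x2,y2)" by (cases p, cases q)
  define x where "x = x1 - x2"
  define y where "y = y1 - y2"
  have nz: "(x,y) \<noteq> (0,0)" using pq pq' x_def y_def by auto
  have "c dvd (x - t*y)"
  proof -
    have "(x1 - t*y1) mod c = (x2 - t*y2) mod c" using pq(4) pq' f_def by simp
    then have "c dvd ((x1 - t*y1) - (x2 - t*y2))" by (simp add: mod_eq_dvd_iff)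
    then show ?thesis by (simp add: x_def y_def algebra_simps)
  qed
  then have "c dvd (x - t*y)*(x + t*y) + (t^2+1)*y^2" using assms(3) by simp
  moreover have "(x - t*y)*(x + t*y) + (t^2+1)*y^2 = x^2 + y^2" by (simp add: power2_eq_square algebra_simps)
  ultimately have dv: "c dvd x^2 + y^2" by simp
  have "x^2 \<le> s^2" "y^2 \<le> s^2" using pq pq' x_def y_def box_diff unfolding S_def by auto
  moreover have "x^2 \<noteq> c" "y^2 \<noteq> c" using sqfree_not_sq assms c1 by auto
  ultimately have lt: "x^2 < c" "y^2 < c" using s by auto
  have pos: "x^2 + y^2 > 0" using nz by (simp add: sum_power2_gt_zero_iff)
  obtain k where k: "x^2 + y^2 = c*k" using dv by blast
  have "k > 0" using k pos assms(1) by (smt (verit) mult_nonneg_nonpos)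
  moreover have "k < 2"
  proof -
    have "c*k < c*2" using k lt by linarith
    then show ?thesis using assms(1) by simp
  qed
  ultimately have "k = 1" by simp
  then show ?thesis using k by auto
qed

lemma prod_gt1: "(u::int) > 0 \<Longrightarrow> v > 0 \<Longrightarrow> u*v > 1 \<or> (u = 1 \<and> v = 1)"
proof (cases "u = 1")
  case False
  assume "u > 0" "v > 0"
  then have "u \<ge> 2" using False by simp
  then have "u*v \<ge> 2*v" using \<open>v > 0\<close> by (intro mult_right_mono) auto
  then show ?thesis using \<open>v > 0\<close> by linarith
qed auto

lemma legendre_pos:
  fixes A B c r s t :: int
  assumes pos: "A > 0" "B > 0" "c > 0"
    and sf: "squarefree A" "squarefree B" "squarefree c"
    and cp: "coprime A B" "coprime B c" "coprime A c"
    and qr: "A dvd r^2 - B*c" "B dvd s^2 - c*A" "c dvd t^2 + A*B"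
  shows "\<exists>x y z. (x,y,z) \<noteq> (0,0,0) \<and> A*x^2 + B*y^2 - c*z^2 = 0"
proof -
  consider "B = 1 \<and> c = 1" | "A = 1 \<and> c = 1" | "A = 1 \<and> B = 1" | "B*c > 1 \<and> A*c > 1 \<and> A*B > 1"
  proof -
    have "B*c > 1 \<or> (B = 1 \<and> c = 1)" using pos
      using prod_gt1 by blast
    moreover have "A*c > 1 \<or> (A = 1 \<and> c = 1)" using pos
      using prod_gt1 by blast
    moreover have "A*B > 1 \<or> (A = 1 \<and> B = 1)" using pos
      using prod_gt1 by blast
    ultimately show ?thesis using that by blast
  qed
  then show ?thesis
  proof cases
    case 1 then show ?thesis by (intro exI[of _ 0] exI[of _ 1]) simp
  next
    case 2 then show ?thesis by (intro exI[of _ 1] exI[of _ 0]) simp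
  next
    case 3
    then have "c dvd t^2 + 1" using qr by simp
    then obtain x y where "x^2 + y^2 = c" using two_sq pos sf by blast
    then show ?thesis using 3 by (intro exI[of _ x] exI[of _ y] exI[of _ 1]) auto
  next
    case 4
    have sfm: "squarefree (B*c)" "squarefree (A*c)" "squarefree (A*B)"
      using squarefree_mult_coprime cp sf by auto
    obtain s1 where s1: "s1 \<ge> 0" "s1^2 \<le> B*c" "B*c < (s1+1)^2" using isqrt_int[of "B*c"] pos by auto
    obtain s2 where s2: "s2 \<ge> 0" "s2^2 \<le> A*c" "A*c < (s2+1)^2" using isqrt_int[of "A*c"] pos by auto
    obtain s3 where s3: "s3 \<ge> 0" "s3^2 \<le> A*B" "A*B < (s3+1)^2" using isqrt_int[of "A*B"] pos by auto
    define S where "S = {0..s1} \<times> {0..s2} \<times> {0..s3}"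
    define T where "T = {0..<A} \<times> {0..<B} \<times> {0..<c}"
    define f where "f = (\<lambda>(x::int,y::int,z::int). ((B*y - r*z) mod A, (c*z + s*x) mod B, (A*x - t*y) mod c))"
    have cS: "card S = nat ((s1+1)*(s2+1)*(s3+1))" unfolding S_def
      using s1(1) s2(1) s3(1) by (simp add: card_cartesian_product nat_mult_distrib)
    have cT: "card T = nat (A*B*c)" unfolding T_def
      using pos by (simp add: card_cartesian_product nat_mult_distrib)
    have "((A*B*c))^2 < ((s1+1)*(s2+1)*(s3+1))^2"
    proof -
      have "(A*B*c)^2 = (B*c)*(A*c)*(A*B)" by (simp add: power2_eq_square algebra_simps)
      also have "\<dots> < (s1+1)^2 * (s2+1)^2 * (s3+1)^2"
      proof -
        have a: "(B*c)*(A*c) < (s1+1)^2 * (s2+1)^2"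
          by (rule mult_strict_mono) (use s1 s2 pos in auto)
        show ?thesis
          by (rule mult_strict_mono[OF a]) (use s1 s2 s3 pos in auto)
      qed
      also have "\<dots> = ((s1+1)*(s2+1)*(s3+1))^2" by (simp add: power_mult_distrib)
      finally show ?thesis .
    qed
    then have "A*B*c < (s1+1)*(s2+1)*(s3+1)"
    proof (rule power_less_imp_less_base)
      show "0 \<le> (s1+1)*(s2+1)*(s3+1)" using s1(1) s2(1) s3(1) by simp
    qed
    moreover have "0 \<le> A*B*c" using pos by simp
    ultimately have "card T < card S" using cS cT by (simp add: nat_less_eq_zless)
    moreover have "f ` S \<subseteq> T" unfolding f_def T_def using pos by auto
    moreover have "finite S" "finite T" unfolding S_def T_def by auto
    ultimately obtain p q where pq: "p \<in> S" "q \<in> S" "p \<noteq> q" "f p = f q"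
      using pigeon[of S T f] by blast
    obtain x1 y1 z1 x2 y2 z2 where pq': "p = (x1,y1,z1)" "q = (x2,y2,z2)" by (cases p, cases q) auto
    define x where "x = x1 - x2"
    define y where "y = y1 - y2"
    define z where "z = z1 - z2"
    have nz: "(x,y,z) \<noteq> (0,0,0)" using pq pq' x_def y_def z_def by auto
    have m: "(B*y1 - r*z1) mod A = (B*y2 - r*z2) mod A" "(c*z1 + s*x1) mod B = (c*z2 + s*x2) mod B"
      "(A*x1 - t*y1) mod c = (A*x2 - t*y2) mod c"
    proof -
      have "f (x1,y1,z1) = f (x2,y2,z2)" using pq(4) pq' by simp
      then show "(B*y1 - r*z1) mod A = (B*y2 - r*z2) mod A" "(c*z1 + s*x1) mod B = (c*z2 + s*x2) mod B"
        "(A*x1 - t*y1) mod c = (A*x2 - t*y2) mod c" by (simp_all add: f_def)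
    qed
    have cA: "A dvd B*y - r*z"
      using m(1) by (simp add: mod_eq_dvd_iff x_def y_def z_def algebra_simps)
    have cB: "B dvd c*z + s*x"
      using m(2) by (simp add: mod_eq_dvd_iff x_def y_def z_def algebra_simps)
    have cc: "c dvd A*x - t*y"
      using m(3) by (simp add: mod_eq_dvd_iff x_def y_def z_def algebra_simps)
    define Q where "Q = A*x^2 + B*y^2 - c*z^2"
    have "A dvd B*Q"
    proof -
      have "B*Q = A*(B*x^2) + (B*y - r*z)*(B*y + r*z) + (r^2 - B*c)*z^2"
        unfolding Q_def by (simp add: power2_eq_square algebra_simps)
      then show ?thesis using cA qr(1) by simp
    qed
    then have dA: "A dvd Q" using cp(1) by (metis coprime_dvd_mult_right_iff coprime_commute)
    have "B dvd c*Q"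
    proof -
      have "-(c*Q) = - (B*(c*y^2)) + (c*z + s*x)*(c*z - s*x) + (s^2 - c*A)*x^2"
        unfolding Q_def by (simp add: power2_eq_square algebra_simps)
      then have "B dvd -(c*Q)" using cB qr(2) by simp
      then show ?thesis by simp
    qed
    then have dB: "B dvd Q" using cp(2) by (metis coprime_dvd_mult_right_iff)
    have "c dvd A*Q"
    proof -
      have "A*Q = (A*x - t*y)*(A*x + t*y) + (t^2 + A*B)*y^2 - c*(A*z^2)"
        unfolding Q_def by (simp add: power2_eq_square algebra_simps)
      then show ?thesis using cc qr(3) by simp
    qed
    then have dc: "c dvd Q" using cp(3) coprime_dvd_mult_right_iff[of c A Q] by (simp add: coprime_commute)
    have "A*B dvd Q" using dA dB cp(1) by (simp add: divides_mult)
    then have "A*B*c dvd Q" using dc cp by (simp add: divides_mult)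
    then obtain k where k: "Q = A*B*c*k" by blast
    have bx: "x^2 < B*c"
    proof -
      have "x^2 \<le> s1^2" using pq pq' x_def box_diff unfolding S_def by auto
      moreover have "x^2 \<noteq> B*c" using sqfree_not_sq sfm 4 by auto
      ultimately show ?thesis using s1 by auto
    qed
    have by': "y^2 < A*c"
    proof -
      have "y^2 \<le> s2^2" using pq pq' y_def box_diff unfolding S_def by auto
      moreover have "y^2 \<noteq> A*c" using sqfree_not_sq sfm 4 by auto
      ultimately show ?thesis using s2 by auto
    qed
    have bz: "z^2 < A*B"
    proof -
      have "z^2 \<le> s3^2" using pq pq' z_def box_diff unfolding S_def by auto
      moreover have "z^2 \<noteq> A*B" using sqfree_not_sq sfm 4 by auto
      ultimately show ?thesis using s3 by auto
    qed
    have "A*x^2 < A*(B*c)" using bx pos by simp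
    moreover have "B*y^2 < B*(A*c)" using by' pos by simp
    moreover have "c*z^2 < c*(A*B)" using bz pos by simp
    moreover have "A*x^2 \<ge> 0" "B*y^2 \<ge> 0" "c*z^2 \<ge> 0" using pos by auto
    ultimately have "- (A*B*c) < Q" "Q < 2*(A*B*c)" unfolding Q_def by (simp_all add: algebra_simps)
    then have "(A*B*c)*(-1) < (A*B*c)*k" "(A*B*c)*k < (A*B*c)*2" using k by simp_all
    moreover have "0 < A*B*c" using pos by simp
    ultimately have "-1 < k" "k < 2" using mult_less_cancel_left_pos by blast+
    then have "k = 0 \<or> k = 1" by auto
    then show ?thesis
    proof
      assume "k = 0"
      then show ?thesis using nz k Q_def by auto
    next
      assume "k = 1"
      then have Qe: "Q = A*B*c" using k by simp
      define X where "X = x*z + B*y"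
      define Y where "Y = y*z - A*x"
      define Z where "Z = z^2 + A*B"
      have "A*X^2 + B*Y^2 - c*Z^2 = (z^2 + A*B)*(Q - A*B*c)"
        unfolding X_def Y_def Z_def Q_def by (simp add: power2_eq_square algebra_simps)
      then have "A*X^2 + B*Y^2 - c*Z^2 = 0" using Qe by simp
      moreover have "Z \<noteq> 0" unfolding Z_def using pos by (smt (verit) zero_le_power2 mult_pos_pos)
      ultimately show ?thesis by auto
    qed
  qed
qed

definition loc :: "int \<Rightarrow> int \<Rightarrow> int \<Rightarrow> int \<Rightarrow> bool" where
  "loc p A B C \<longleftrightarrow> (\<forall>k. \<exists>x y z. \<not>(p dvd x \<and> p dvd y \<and> p dvd z) \<and> p^k dvd (A*x^2 + B*y^2 + C*z^2))"

definition glob :: "int \<Rightarrow> int \<Rightarrow> int \<Rightarrow> bool" where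
  "glob A B C \<longleftrightarrow> (\<exists>x y z. (x,y,z) \<noteq> (0,0,0) \<and> A*x^2 + B*y^2 + C*z^2 = 0)"

lemma prime_sq_dvd_prod:
  fixes p a x :: int
  assumes "prime p" "\<not> p dvd x" "p^2 dvd a*x^2" shows "p^2 dvd a"
proof -
  have "coprime (p^2) (x^2)" using assms(1,2) by (simp add: prime_imp_coprime)
  then show ?thesis using assms(3) coprime_dvd_mult_left_iff by blast
qed

lemma qr_prime:
  fixes p A B C :: int
  assumes p: "prime p" and pA: "p dvd A" and sq: "\<not> p^2 dvd A" and pB: "\<not> p dvd B" and pC: "\<not> p dvd C"
    and l: "p = 2 \<or> loc p A B C"
  shows "\<exists>w. p dvd w^2 + B*C"
proof (cases "p = 2")
  case True
  have "even ((B*C)^2 + B*C)" by simp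
  then show ?thesis using True by blast
next
  case False
  then have "loc p A B C" using l by simp
  then obtain x y z where pr: "\<not>(p dvd x \<and> p dvd y \<and> p dvd z)" and d2: "p^2 dvd (A*x^2 + B*y^2 + C*z^2)"
    unfolding loc_def by blast
  have d1: "p dvd (A*x^2 + B*y^2 + C*z^2)" using d2 by (meson dvd_power dvd_trans pos2 p prime_gt_0_int zero_less_numeral)
  then have d1': "p dvd (B*y^2 + C*z^2)" using pA by (metis dvd_add_right_iff dvd_mult2 add.assoc)
  have yz: "p dvd y \<longleftrightarrow> p dvd z"
  proof
    assume "p dvd y"
    then have "p dvd B*y^2" by (simp add: power2_eq_square)
    then have "p dvd C*z^2" using d1' by (simp add: dvd_add_right_iff)
    then show "p dvd z" using p pC by (metis prime_dvd_mult_iff prime_dvd_power)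
  next
    assume "p dvd z"
    then have "p dvd C*z^2" by (simp add: power2_eq_square)
    then have "p dvd B*y^2" using d1' by (simp add: dvd_add_left_iff)
    then show "p dvd y" using p pB by (metis prime_dvd_mult_iff prime_dvd_power)
  qed
  have nz: "\<not> p dvd z"
  proof
    assume pz: "p dvd z"
    then have py: "p dvd y" using yz by simp
    have px: "\<not> p dvd x" using pr py pz by blast
    obtain y' z' where "y = p*y'" "z = p*z'" using py pz by blast
    then have "B*y^2 + C*z^2 = p^2*(B*y'^2 + C*z'^2)" by (simp add: power2_eq_square algebra_simps)
    then have "p^2 dvd B*y^2 + C*z^2" by simp
    then have "p^2 dvd A*x^2" using d2 by (metis add.assoc dvd_add_left_iff)
    then show False using prime_sq_dvd_prod[OF p px] sq by blast
  qed
  have "coprime z p" using nz p by (simp add: prime_imp_coprime coprime_commute)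
  then obtain w0 where w0: "[z*w0 = 1] (mod p)" using cong_solve_coprime_int by blast
  then have pw: "p dvd (1 - z*w0)" by (simp add: cong_iff_dvd_diff dvd_diff_commute)
  have "(B*y*w0)^2 + B*C = B*w0^2*(B*y^2 + C*z^2) + B*C*((1 - z*w0)*(1 + z*w0))"
    by (simp add: power2_eq_square algebra_simps)
  moreover have "p dvd B*w0^2*(B*y^2 + C*z^2) + B*C*((1 - z*w0)*(1 + z*w0))"
    using d1' pw by simp
  ultimately show ?thesis by metis
qed

lemma crt_sq:
  fixes A m :: int
  assumes "squarefree A" "\<And>p. prime p \<Longrightarrow> p dvd A \<Longrightarrow> \<exists>w. p dvd w^2 + m"
  shows "\<exists>r. A dvd r^2 + m"
  using assms
proof (induction "nat \<bar>A\<bar>" arbitrary: A rule: less_induct)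
  case less
  show ?case
  proof (cases "is_unit A")
    case True then show ?thesis by (intro exI[of _ 0]) (simp add: unit_imp_dvd)
  next
    case False
    have A0: "A \<noteq> 0" using less.prems(1) by auto
    obtain p where p: "p dvd A" "prime p" using prime_divisor_exists[OF A0 False] by blast
    then obtain A' where A': "A = p*A'" by blast
    have sfA': "squarefree A'" using less.prems(1) A' squarefree_mono by (metis dvd_triv_right)
    have npA': "\<not> p dvd A'"
    proof
      assume "p dvd A'"
      then have "p^2 dvd A" using A' by (simp add: power2_eq_square)
      then show False using squarefreeD[OF less.prems(1)] p(2) by (metis not_prime_unit)
    qed
    have "\<bar>A'\<bar> < \<bar>A\<bar>"
    proof -
      have "\<bar>p\<bar> > 1" using p(2) by (simp add: prime_int_iff)
      moreover have "A' \<noteq> 0" using A0 A' by auto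
      ultimately show ?thesis using A' by (simp add: abs_mult)
    qed
    then have "nat \<bar>A'\<bar> < nat \<bar>A\<bar>" by simp
    moreover have "\<exists>w. q dvd w^2 + m" if "prime q" "q dvd A'" for q
      using less.prems(2)[OF that(1)] that(2) A' by (meson dvd_mult_left dvd_trans dvd_triv_right)
    ultimately obtain r' where r': "A' dvd r'^2 + m"
      using less.hyps[OF _ sfA'] by blast
    obtain w where w: "p dvd w^2 + m" using less.prems(2)[OF p(2) p(1)] by blast
    have "coprime p A'" using npA' p(2) by (simp add: prime_imp_coprime)
    then have g: "gcd p A' = 1" by (rule coprime_imp_gcd_eq_1)
    obtain u v where "u*p + v*A' = gcd p A'" using bezout_int by blast
    then have uv: "v*A' = 1 - u*p" using g by simp
    define r where "r = w*v*A' + r'*u*p"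
    have "r = w*(v*A') + r'*u*p" unfolding r_def by (simp add: mult.assoc)
    also have "\<dots> = w*(1 - u*p) + r'*u*p" using uv by simp
    finally have r1: "r = w + p*(r'*u - w*u)" by (simp add: algebra_simps)
    have "r - w = p*(r'*u - w*u)" using r1 by simp
    then have "p dvd r - w" by simp
    then have "p dvd (r - w)*(r + w) + (w^2 + m)" using w by simp
    moreover have "(r - w)*(r + w) + (w^2 + m) = r^2 + m" by (simp add: power2_eq_square algebra_simps)
    ultimately have dp: "p dvd r^2 + m" by simp
    have "u*p = 1 - v*A'" using uv by simp
    have "r = w*v*A' + r'*(u*p)" unfolding r_def by (simp add: mult.assoc)
    also have "\<dots> = w*v*A' + r'*(1 - v*A')" using \<open>u*p = 1 - v*A'\<close> by simp
    finally have r2: "r = r' + A'*(w*v - r'*v)" by (simp add: algebra_simps)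
    have "r - r' = A'*(w*v - r'*v)" using r2 by simp
    then have "A' dvd r - r'" by simp
    then have "A' dvd (r - r')*(r + r') + (r'^2 + m)" using r' by simp
    moreover have "(r - r')*(r + r') + (r'^2 + m) = r^2 + m" by (simp add: power2_eq_square algebra_simps)
    ultimately have dA': "A' dvd r^2 + m" by simp
    have "p*A' dvd r^2 + m" using dp dA' \<open>coprime p A'\<close> by (simp add: divides_mult)
    then show ?thesis using A' by blast
  qed
qed

lemma loc_swap12: assumes "loc p A B C" shows "loc p B A C"
  unfolding loc_def
proof
  fix k
  obtain x y z where h: "\<not>(p dvd x \<and> p dvd y \<and> p dvd z)" "p^k dvd (A*x^2 + B*y^2 + C*z^2)"
    using assms unfolding loc_def by blast
  have e: "B*y^2 + A*x^2 + C*z^2 = A*x^2 + B*y^2 + C*z^2" by simp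
  have "p^k dvd (B*y^2 + A*x^2 + C*z^2)" unfolding e by (rule h(2))
  moreover have "\<not>(p dvd y \<and> p dvd x \<and> p dvd z)" using h by auto
  ultimately show "\<exists>x y z. \<not>(p dvd x \<and> p dvd y \<and> p dvd z) \<and> p^k dvd (B*x^2 + A*y^2 + C*z^2)"
    by blast
qed

lemma loc_swap23: assumes "loc p A B C" shows "loc p A C B"
  unfolding loc_def
proof
  fix k
  obtain x y z where h: "\<not>(p dvd x \<and> p dvd y \<and> p dvd z)" "p^k dvd (A*x^2 + B*y^2 + C*z^2)"
    using assms unfolding loc_def by blast
  have e: "A*x^2 + C*z^2 + B*y^2 = A*x^2 + B*y^2 + C*z^2" by simp
  have "p^k dvd (A*x^2 + C*z^2 + B*y^2)" unfolding e by (rule h(2))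
  moreover have "\<not>(p dvd x \<and> p dvd z \<and> p dvd y)" using h by auto
  ultimately show "\<exists>x y z. \<not>(p dvd x \<and> p dvd y \<and> p dvd z) \<and> p^k dvd (A*x^2 + C*y^2 + B*z^2)"
    by blast
qed

lemma loc_neg: assumes "loc p A B C" shows "loc p (-A) (-B) (-C)"
  unfolding loc_def
proof
  fix k
  obtain x y z where h: "\<not>(p dvd x \<and> p dvd y \<and> p dvd z)" "p^k dvd (A*x^2 + B*y^2 + C*z^2)"
    using assms unfolding loc_def by blast
  have e: "(-A)*x^2 + (-B)*y^2 + (-C)*z^2 = -(A*x^2 + B*y^2 + C*z^2)" by simp
  have "p^k dvd ((-A)*x^2 + (-B)*y^2 + (-C)*z^2)" unfolding e dvd_minus_iff by (rule h(2))
  then show "\<exists>x y z. \<not>(p dvd x \<and> p dvd y \<and> p dvd z) \<and> p^k dvd ((-A)*x^2 + (-B)*y^2 + (-C)*z^2)"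
    using h(1) by blast
qed

lemma glob_swap12: assumes "glob A B C" shows "glob B A C"
proof -
  obtain x y z where h: "(x,y,z) \<noteq> (0,0,0)" "A*x^2 + B*y^2 + C*z^2 = 0" using assms unfolding glob_def by blast
  then have "(y,x,z) \<noteq> (0,0,0)" "B*y^2 + A*x^2 + C*z^2 = 0" by (auto simp: algebra_simps)
  then show ?thesis unfolding glob_def by blast
qed
lemma glob_swap23: assumes "glob A B C" shows "glob A C B"
proof -
  obtain x y z where h: "(x,y,z) \<noteq> (0,0,0)" "A*x^2 + B*y^2 + C*z^2 = 0" using assms unfolding glob_def by blast
  then have "(x,z,y) \<noteq> (0,0,0)" "A*x^2 + C*z^2 + B*y^2 = 0" by (auto simp: algebra_simps)
  then show ?thesis unfolding glob_def by blast
qed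
lemma glob_neg: assumes "glob (-A) (-B) (-C)" shows "glob A B C"
proof -
  obtain x y z where h: "(x,y,z) \<noteq> (0,0,0)" "(-A)*x^2 + (-B)*y^2 + (-C)*z^2 = 0" using assms unfolding glob_def by blast
  then have "A*x^2 + B*y^2 + C*z^2 = 0" by simp
  then show ?thesis using h(1) unfolding glob_def by blast
qed

definition QRc :: "int \<Rightarrow> int \<Rightarrow> int \<Rightarrow> bool" where
  "QRc A B C \<longleftrightarrow> (\<exists>r. A dvd r^2 + B*C) \<and> (\<exists>s. B dvd s^2 + C*A) \<and> (\<exists>t. C dvd t^2 + A*B)"
definition SC :: "int \<Rightarrow> int \<Rightarrow> int \<Rightarrow> bool" where
  "SC A B C \<longleftrightarrow> squarefree A \<and> squarefree B \<and> squarefree C \<and> coprime A B \<and> coprime B C \<and> coprime A C"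

lemma QRc_swap12: "QRc A B C \<Longrightarrow> QRc B A C" unfolding QRc_def by (metis mult.commute)
lemma QRc_swap23: "QRc A B C \<Longrightarrow> QRc A C B" unfolding QRc_def by (metis mult.commute)
lemma QRc_neg: "QRc A B C \<Longrightarrow> QRc (-A) (-B) (-C)" unfolding QRc_def by simp
lemma SC_swap12: "SC A B C \<Longrightarrow> SC B A C" unfolding SC_def by (simp add: coprime_commute)
lemma SC_swap23: "SC A B C \<Longrightarrow> SC A C B" unfolding SC_def by (simp add: coprime_commute)
lemma SC_neg: "SC A B C \<Longrightarrow> SC (-A) (-B) (-C)" unfolding SC_def by simp

lemma legendre_signed:
  assumes "A > 0" "B > 0" "C < 0" "SC A B C" "QRc A B C"
  shows "glob A B C"
proof -
  obtain r s t where qr: "A dvd r^2 + B*C" "B dvd s^2 + C*A" "C dvd t^2 + A*B"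
    using assms(5) unfolding QRc_def by blast
  have sc: "squarefree A" "squarefree B" "squarefree (-C)" "coprime A B" "coprime B (-C)" "coprime A (-C)"
    using assms(4) unfolding SC_def by auto
  have "\<exists>x y z. (x,y,z) \<noteq> (0,0,0) \<and> A*x^2 + B*y^2 - (-C)*z^2 = 0"
    by (rule legendre_pos[OF assms(1,2) _ sc, of r s t]) (use assms(3) qr in auto)
  then show ?thesis unfolding glob_def by simp
qed

lemma legendre_gen:
  assumes "A \<noteq> 0" "B \<noteq> 0" "C \<noteq> 0" "\<not>(A>0 \<and> B>0 \<and> C>0)" "\<not>(A<0 \<and> B<0 \<and> C<0)"
    "SC A B C" "QRc A B C"
  shows "glob A B C"
proof -
  have two_pos: "glob A B C" if hh: "SC A B C" "QRc A B C" "A \<noteq> 0" "B \<noteq> 0" "C \<noteq> 0"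
    "(A > 0 \<and> B > 0 \<and> C < 0) \<or> (A > 0 \<and> B < 0 \<and> C > 0) \<or> (A < 0 \<and> B > 0 \<and> C > 0)" for A B C :: int
  proof -
    consider "A > 0 \<and> B > 0 \<and> C < 0" | "A > 0 \<and> B < 0 \<and> C > 0" | "A < 0 \<and> B > 0 \<and> C > 0"
      using hh(6) by blast
    then show ?thesis
    proof cases
      case 1 then show ?thesis using legendre_signed hh by blast
    next
      case 2 then show ?thesis using legendre_signed[of A C B] that hh SC_swap23 QRc_swap23 glob_swap23 by blast
    next
      case 3
      have "glob C B A" using legendre_signed[of C B A] 3 hh
        by (meson SC_swap12 SC_swap23 QRc_swap12 QRc_swap23)
      then show ?thesis by (meson glob_swap12 glob_swap23)
    qed
  qed
  show ?thesis
  proof (cases "(A > 0 \<and> B > 0 \<and> C < 0) \<or> (A > 0 \<and> B < 0 \<and> C > 0) \<or> (A < 0 \<and> B > 0 \<and> C > 0)")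
    case True then show ?thesis using two_pos assms by blast
  next
    case False
    then have "(-A > 0 \<and> -B > 0 \<and> -C < 0) \<or> (-A > 0 \<and> -B < 0 \<and> -C > 0) \<or> (-A < 0 \<and> -B > 0 \<and> -C > 0)"
      using assms(1-5) by (cases "A>0"; cases "B>0"; cases "C>0"; simp_all add: not_less le_less)
    then have "glob (-A) (-B) (-C)" using two_pos[of "-A" "-B" "-C"] SC_neg QRc_neg assms by simp
    then show ?thesis by (rule glob_neg)
  qed
qed

lemma coprime_by_primes:
  fixes a b :: int
  assumes "a \<noteq> 0" "\<And>p. prime p \<Longrightarrow> p dvd a \<Longrightarrow> \<not> p dvd b"
  shows "coprime a b"
proof (rule ccontr)
  assume nc: "\<not> coprime a b"
  have g0: "gcd a b \<noteq> 0" using assms(1) by simp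
  have "\<not> is_unit (gcd a b)" using nc by (simp add: coprime_iff_gcd_eq_1 is_unit_gcd)
  then obtain p where "p dvd gcd a b" "prime p" using prime_divisor_exists[OF g0] by blast
  then show False using assms(2) by (meson dvd_gcdD1 dvd_gcdD2)
qed

lemma sqfree_by_primes:
  fixes a :: int
  assumes "a \<noteq> 0" "\<And>p. prime p \<Longrightarrow> \<not> p^2 dvd a"
  shows "squarefree a"
proof (rule squarefreeI)
  fix x assume x: "x^2 dvd a"
  show "x dvd 1"
  proof (rule ccontr)
    assume "\<not> x dvd 1"
    moreover have "x \<noteq> 0" using x assms(1) by auto
    ultimately obtain p where "p dvd x" "prime p" using prime_divisor_exists by blast
    then have "p^2 dvd x^2" by (simp add: dvd_power_same)
    then show False using x assms(2) \<open>prime p\<close> dvd_trans by blast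
  qed
qed

lemma loc_S1:
  fixes p q A' B C :: int
  assumes p: "prime p" and q: "prime q" and l: "loc q (p^2*A') B C"
  shows "loc q A' B C"
  unfolding loc_def
proof
  fix k
  show "\<exists>x y z. \<not>(q dvd x \<and> q dvd y \<and> q dvd z) \<and> q^k dvd (A'*x^2 + B*y^2 + C*z^2)"
  proof (cases "q = p")
    case True
    obtain x y z where h: "\<not>(p dvd x \<and> p dvd y \<and> p dvd z)" "p^(k+2) dvd (p^2*A'*x^2 + B*y^2 + C*z^2)"
      using l True unfolding loc_def by blast
    show ?thesis
    proof (cases "p dvd y \<and> p dvd z")
      case False
      have "p^k dvd p^(k+2)" by (simp add: le_imp_power_dvd)
      then have d: "p^k dvd (p^2*A'*x^2 + B*y^2 + C*z^2)" using h(2) by (rule dvd_trans)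
      have e: "A'*(p*x)^2 + B*y^2 + C*z^2 = p^2*A'*x^2 + B*y^2 + C*z^2" by (simp add: power_mult_distrib)
      have "p^k dvd (A'*(p*x)^2 + B*y^2 + C*z^2)" unfolding e by (rule d)
      then show ?thesis using False True by blast
    next
      case yz: True
      then obtain y' z' where yz': "y = p*y'" "z = p*z'" by blast
      have "p^2*A'*x^2 + B*y^2 + C*z^2 = p^2*(A'*x^2 + B*y'^2 + C*z'^2)"
        using yz' by (simp add: power_mult_distrib algebra_simps)
      then have dv: "p^(k+2) dvd p^2*(A'*x^2 + B*y'^2 + C*z'^2)" using h(2) by simp
      have eq: "p^(k+2) = p^2*p^k" by (simp add: power_add mult.commute power2_eq_square)
      have "p^2*p^k dvd p^2*(A'*x^2 + B*y'^2 + C*z'^2)" using dv unfolding eq by assumption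
      moreover have "p^2 \<noteq> 0" using p by (simp add: prime_gt_0_int)
      ultimately have "p^k dvd (A'*x^2 + B*y'^2 + C*z'^2)" using dvd_mult_cancel_left by blast
      moreover have "\<not> p dvd x" using h(1) yz by blast
      ultimately show ?thesis using True by blast
    qed
  next
    case False
    obtain x y z where h: "\<not>(q dvd x \<and> q dvd y \<and> q dvd z)" "q^k dvd (p^2*A'*x^2 + B*y^2 + C*z^2)"
      using l unfolding loc_def by blast
    have "\<not> q dvd p" using False p q by (metis primes_dvd_imp_eq prime_gt_0_int abs_of_pos)
    then have "q dvd p*x \<longleftrightarrow> q dvd x" using q by (simp add: prime_dvd_mult_iff)
    moreover have e: "A'*(p*x)^2 + B*y^2 + C*z^2 = p^2*A'*x^2 + B*y^2 + C*z^2" by (simp add: power_mult_distrib)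
    ultimately have "q^k dvd (A'*(p*x)^2 + B*y^2 + C*z^2)" "\<not>(q dvd p*x \<and> q dvd y \<and> q dvd z)"
      using h by (simp_all only: e) simp
    then show ?thesis by blast
  qed
qed

lemma loc_S2:
  fixes p q A' B' C' :: int
  assumes p: "prime p" and q: "prime q" and l: "loc q (p*A') (p*B') (p*C')"
  shows "loc q A' B' C'"
  unfolding loc_def
proof
  fix k
  obtain x y z where h: "\<not>(q dvd x \<and> q dvd y \<and> q dvd z)" "q^(k+1) dvd (p*A'*x^2 + p*B'*y^2 + p*C'*z^2)"
    using l unfolding loc_def by blast
  have e: "p*A'*x^2 + p*B'*y^2 + p*C'*z^2 = p*(A'*x^2 + B'*y^2 + C'*z^2)" by (simp add: algebra_simps)
  have "q^k dvd (A'*x^2 + B'*y^2 + C'*z^2)"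
  proof (cases "q = p")
    case True
    then have "p*p^k dvd p*(A'*x^2 + B'*y^2 + C'*z^2)" using h(2) e by simp
    then show ?thesis using True p by (simp add: prime_gt_0_int)
  next
    case False
    have "\<not> q dvd p" using False p q by (metis primes_dvd_imp_eq prime_gt_0_int abs_of_pos)
    then have "coprime (q^(k+1)) p" using q by (simp add: prime_imp_coprime)
    then have "q^(k+1) dvd (A'*x^2 + B'*y^2 + C'*z^2)" using h(2) e coprime_dvd_mult_right_iff by metis
    moreover have "q^k dvd q^(k+1)" by (simp add: le_imp_power_dvd)
    ultimately show ?thesis using dvd_trans by blast
  qed
  then show "\<exists>x y z. \<not>(q dvd x \<and> q dvd y \<and> q dvd z) \<and> q^k dvd (A'*x^2 + B'*y^2 + C'*z^2)"
    using h(1) by blast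
qed

lemma loc_S3:
  fixes p q A' B' C :: int
  assumes p: "prime p" and q: "prime q" and l: "loc q (p*A') (p*B') C" and pC: "\<not> p dvd C"
  shows "loc q A' B' (p*C)"
  unfolding loc_def
proof
  fix k
  show "\<exists>x y z. \<not>(q dvd x \<and> q dvd y \<and> q dvd z) \<and> q^k dvd (A'*x^2 + B'*y^2 + p*C*z^2)"
  proof (cases "q = p")
    case True
    obtain x y z where h: "\<not>(p dvd x \<and> p dvd y \<and> p dvd z)" "p^(k+1) dvd (p*A'*x^2 + p*B'*y^2 + C*z^2)"
      using l True unfolding loc_def by blast
    have "p dvd p^(k+1)" by simp
    then have "p dvd (p*A'*x^2 + p*B'*y^2 + C*z^2)" using h(2) by (rule dvd_trans)
    moreover have "p dvd p*A'*x^2 + p*B'*y^2" by (simp add: mult.assoc)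
    ultimately have "p dvd C*z^2" by (simp add: dvd_add_right_iff)
    then have "p dvd z" using p pC by (metis prime_dvd_mult_iff prime_dvd_power)
    then obtain z' where z': "z = p*z'" by blast
    have "p*A'*x^2 + p*B'*y^2 + C*z^2 = p*(A'*x^2 + B'*y^2 + p*C*z'^2)"
      using z' by (simp add: power2_eq_square algebra_simps)
    then have "p*p^k dvd p*(A'*x^2 + B'*y^2 + p*C*z'^2)" using h(2) by simp
    then have "p^k dvd (A'*x^2 + B'*y^2 + p*C*z'^2)" using p by (simp add: prime_gt_0_int)
    moreover have "\<not>(p dvd x \<and> p dvd y)" using h(1) \<open>p dvd z\<close> by blast
    ultimately show ?thesis using True by blast
  next
    case False
    obtain x y z where h: "\<not>(q dvd x \<and> q dvd y \<and> q dvd z)" "q^k dvd (p*A'*x^2 + p*B'*y^2 + C*z^2)"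
      using l unfolding loc_def by blast
    have "\<not> q dvd p" using False p q by (metis primes_dvd_imp_eq prime_gt_0_int abs_of_pos)
    then have "q dvd p*x \<longleftrightarrow> q dvd x" "q dvd p*y \<longleftrightarrow> q dvd y" using q by (simp_all add: prime_dvd_mult_iff)
    moreover have "A'*(p*x)^2 + B'*(p*y)^2 + p*C*z^2 = p*(p*A'*x^2 + p*B'*y^2 + C*z^2)"
      by (simp add: power2_eq_square algebra_simps)
    moreover have "q^k dvd p*(p*A'*x^2 + p*B'*y^2 + C*z^2)" using h(2) by simp
    ultimately have "q^k dvd (A'*(p*x)^2 + B'*(p*y)^2 + p*C*z^2)" "\<not>(q dvd p*x \<and> q dvd p*y \<and> q dvd z)"
      using h(1) by simp_all
    then show ?thesis by blast
  qed
qed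

definition hypo :: "int \<Rightarrow> int \<Rightarrow> int \<Rightarrow> bool" where
  "hypo A B C \<longleftrightarrow> A \<noteq> 0 \<and> B \<noteq> 0 \<and> C \<noteq> 0 \<and> \<not>(A>0 \<and> B>0 \<and> C>0) \<and> \<not>(A<0 \<and> B<0 \<and> C<0) \<and>
     (\<forall>p. prime p \<and> p \<noteq> 2 \<longrightarrow> loc p A B C)"

lemma hypo_swap12: "hypo A B C \<Longrightarrow> hypo B A C"
  unfolding hypo_def using loc_swap12 by blast
lemma hypo_swap23: "hypo A B C \<Longrightarrow> hypo A C B"
  unfolding hypo_def using loc_swap23 by blast

lemma reduce_sq:
  assumes h: "hypo A B C" and p: "prime p" and d: "p^2 dvd A"
    and IH: "\<And>A' B' C'. nat \<bar>A'*B'*C'\<bar> < nat \<bar>A*B*C\<bar> \<Longrightarrow> hypo A' B' C' \<Longrightarrow> glob A' B' C'"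
  shows "glob A B C"
proof -
  obtain A' where A': "A = p^2*A'" using d by blast
  have pp: "p^2 > 0" using p by (simp add: prime_gt_0_int)
  have p2: "p^2 > 1" using p by (metis prime_gt_1_int one_less_power zero_less_numeral pos2)
  have nz: "A' \<noteq> 0" "B \<noteq> 0" "C \<noteq> 0" using h A' unfolding hypo_def by auto
  have sA: "A > 0 \<longleftrightarrow> A' > 0" "A < 0 \<longleftrightarrow> A' < 0" using A' pp by (simp_all add: zero_less_mult_iff mult_less_0_iff)
  have "hypo A' B C"
    unfolding hypo_def using h nz sA loc_S1[OF p] A' unfolding hypo_def by metis
  moreover have "nat \<bar>A'*B*C\<bar> < nat \<bar>A*B*C\<bar>"
  proof -
    have "\<bar>A'*B*C\<bar> > 0" using nz by simp
    then have "\<bar>A'*B*C\<bar> < p^2 * \<bar>A'*B*C\<bar>" using p2 by simp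
    also have "\<dots> = \<bar>A*B*C\<bar>" using A' pp by (simp add: abs_mult)
    finally show ?thesis using h unfolding hypo_def by simp
  qed
  ultimately have "glob A' B C" using IH by blast
  then obtain x y z where s: "(x,y,z) \<noteq> (0,0,0)" "A'*x^2 + B*y^2 + C*z^2 = 0" unfolding glob_def by blast
  have "A*x^2 + B*(p*y)^2 + C*(p*z)^2 = p^2*(A'*x^2 + B*y^2 + C*z^2)"
    using A' by (simp add: power_mult_distrib algebra_simps)
  then have "A*x^2 + B*(p*y)^2 + C*(p*z)^2 = 0" using s by simp
  moreover have "(x, p*y, p*z) \<noteq> (0,0,0)" using s p by (auto simp: prime_gt_0_int)
  ultimately show ?thesis unfolding glob_def by blast
qed

lemma reduce_all:
  assumes h: "hypo A B C" and p: "prime p" and d: "p dvd A" "p dvd B" "p dvd C"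
    and IH: "\<And>A' B' C'. nat \<bar>A'*B'*C'\<bar> < nat \<bar>A*B*C\<bar> \<Longrightarrow> hypo A' B' C' \<Longrightarrow> glob A' B' C'"
  shows "glob A B C"
proof -
  obtain A' B' C' where A': "A = p*A'" "B = p*B'" "C = p*C'" using d by (meson dvdE)
  have pp: "p > 1" using p by (simp add: prime_gt_1_int)
  have nz: "A' \<noteq> 0" "B' \<noteq> 0" "C' \<noteq> 0" using h A' unfolding hypo_def by auto
  have sA: "A > 0 \<longleftrightarrow> A' > 0" "A < 0 \<longleftrightarrow> A' < 0" "B > 0 \<longleftrightarrow> B' > 0" "B < 0 \<longleftrightarrow> B' < 0"
    "C > 0 \<longleftrightarrow> C' > 0" "C < 0 \<longleftrightarrow> C' < 0"
    using A' pp by (simp_all add: zero_less_mult_iff mult_less_0_iff)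
  have "hypo A' B' C'"
    unfolding hypo_def using h nz sA loc_S2[OF p] A' unfolding hypo_def by metis
  moreover have "nat \<bar>A'*B'*C'\<bar> < nat \<bar>A*B*C\<bar>"
  proof -
    have "\<bar>A'*B'*C'\<bar> > 0" using nz by simp
    moreover have "p*p*p > 1" using pp by (metis less_1_mult)
    ultimately have "\<bar>A'*B'*C'\<bar> < (p*p*p) * \<bar>A'*B'*C'\<bar>" by simp
    also have "\<dots> = \<bar>A*B*C\<bar>" using A' pp by (simp add: abs_mult algebra_simps)
    finally show ?thesis using h unfolding hypo_def by simp
  qed
  ultimately have "glob A' B' C'" using IH by blast
  then obtain x y z where s: "(x,y,z) \<noteq> (0,0,0)" "A'*x^2 + B'*y^2 + C'*z^2 = 0" unfolding glob_def by blast
  have "A*x^2 + B*y^2 + C*z^2 = p*(A'*x^2 + B'*y^2 + C'*z^2)"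
    using A' by (simp add: algebra_simps)
  then show ?thesis using s unfolding glob_def by auto
qed

lemma reduce_two:
  assumes h: "hypo A B C" and p: "prime p" and d: "p dvd A" "p dvd B" "\<not> p dvd C"
    and IH: "\<And>A' B' C'. nat \<bar>A'*B'*C'\<bar> < nat \<bar>A*B*C\<bar> \<Longrightarrow> hypo A' B' C' \<Longrightarrow> glob A' B' C'"
  shows "glob A B C"
proof -
  obtain A' B' where A': "A = p*A'" "B = p*B'" using d by (meson dvdE)
  have pp: "p > 1" using p by (simp add: prime_gt_1_int)
  have nz: "A' \<noteq> 0" "B' \<noteq> 0" "p*C \<noteq> 0" using h A' pp unfolding hypo_def by auto
  have sA: "A > 0 \<longleftrightarrow> A' > 0" "A < 0 \<longleftrightarrow> A' < 0" "B > 0 \<longleftrightarrow> B' > 0" "B < 0 \<longleftrightarrow> B' < 0"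
    "C > 0 \<longleftrightarrow> p*C > 0" "C < 0 \<longleftrightarrow> p*C < 0"
    using A' pp by (simp_all add: zero_less_mult_iff mult_less_0_iff)
  have "hypo A' B' (p*C)"
    unfolding hypo_def using h nz sA loc_S3[OF p] A' d(3) unfolding hypo_def by metis
  moreover have "nat \<bar>A'*B'*(p*C)\<bar> < nat \<bar>A*B*C\<bar>"
  proof -
    have "\<bar>A'*B'*(p*C)\<bar> > 0" using nz by simp
    then have "\<bar>A'*B'*(p*C)\<bar> < p * \<bar>A'*B'*(p*C)\<bar>" using pp by simp
    also have "\<dots> = \<bar>A*B*C\<bar>" using A' pp by (simp add: abs_mult algebra_simps)
    finally show ?thesis using h unfolding hypo_def by simp
  qed
  ultimately have "glob A' B' (p*C)" using IH by blast
  then obtain x y z where s: "(x,y,z) \<noteq> (0,0,0)" "A'*x^2 + B'*y^2 + p*C*z^2 = 0" unfolding glob_def by blast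
  have "A*x^2 + B*y^2 + C*(p*z)^2 = p*(A'*x^2 + B'*y^2 + p*C*z^2)"
    using A' by (simp add: power2_eq_square algebra_simps)
  then have "A*x^2 + B*y^2 + C*(p*z)^2 = 0" using s by simp
  moreover have "(x, y, p*z) \<noteq> (0,0,0)" using s pp by auto
  ultimately show ?thesis unfolding glob_def by blast
qed

lemma hasse_noprime:
  assumes h: "hypo A B C"
    and nsq: "\<And>p. prime p \<Longrightarrow> \<not> p^2 dvd A \<and> \<not> p^2 dvd B \<and> \<not> p^2 dvd C"
    and n2: "\<And>p. prime p \<Longrightarrow> \<not>(p dvd A \<and> p dvd B) \<and> \<not>(p dvd A \<and> p dvd C) \<and> \<not>(p dvd B \<and> p dvd C)"
  shows "glob A B C"
proof -
  have nz: "A \<noteq> 0" "B \<noteq> 0" "C \<noteq> 0" using h unfolding hypo_def by auto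
  have "squarefree A" by (rule sqfree_by_primes[OF nz(1)]) (use nsq in blast)
  moreover have "squarefree B" by (rule sqfree_by_primes[OF nz(2)]) (use nsq in blast)
  moreover have "squarefree C" by (rule sqfree_by_primes[OF nz(3)]) (use nsq in blast)
  moreover have "coprime A B" by (rule coprime_by_primes[OF nz(1)]) (use n2 in blast)
  moreover have "coprime B C" by (rule coprime_by_primes[OF nz(2)]) (use n2 in blast)
  moreover have "coprime A C" by (rule coprime_by_primes[OF nz(1)]) (use n2 in blast)
  ultimately have sc: "SC A B C" unfolding SC_def by blast
  have l: "loc p A B C" "loc p B C A" "loc p C A B" if "prime p" "p \<noteq> 2" for p
  proof -
    show "loc p A B C" using h that unfolding hypo_def by blast
    then show "loc p B C A" by (rule loc_swap23[OF loc_swap12])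
    show "loc p C A B" using \<open>loc p A B C\<close> by (rule loc_swap12[OF loc_swap23])
  qed
  have sfs: "squarefree A" "squarefree B" "squarefree C" using sc unfolding SC_def by auto
  have "\<exists>r. A dvd r^2 + B*C"
  proof (rule crt_sq[OF sfs(1)])
    fix p :: int assume p: "prime p" "p dvd A"
    show "\<exists>w. p dvd w^2 + B*C"
    proof (rule qr_prime[OF p])
      show "\<not> p^2 dvd A" using nsq[OF p(1)] by blast
      show "\<not> p dvd B" "\<not> p dvd C" using n2[OF p(1)] p(2) by blast+
      show "p = 2 \<or> loc p A B C" using l(1)[OF p(1)] by blast
    qed
  qed
  moreover have "\<exists>s. B dvd s^2 + C*A"
  proof (rule crt_sq[OF sfs(2)])
    fix p :: int assume p: "prime p" "p dvd B"
    show "\<exists>w. p dvd w^2 + C*A"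
    proof (rule qr_prime[OF p])
      show "\<not> p^2 dvd B" using nsq[OF p(1)] by blast
      show "\<not> p dvd C" "\<not> p dvd A" using n2[OF p(1)] p(2) by blast+
      show "p = 2 \<or> loc p B C A" using l(2)[OF p(1)] by blast
    qed
  qed
  moreover have "\<exists>t. C dvd t^2 + A*B"
  proof (rule crt_sq[OF sfs(3)])
    fix p :: int assume p: "prime p" "p dvd C"
    show "\<exists>w. p dvd w^2 + A*B"
    proof (rule qr_prime[OF p])
      show "\<not> p^2 dvd C" using nsq[OF p(1)] by blast
      show "\<not> p dvd A" "\<not> p dvd B" using n2[OF p(1)] p(2) by blast+
      show "p = 2 \<or> loc p C A B" using l(3)[OF p(1)] by blast
    qed
  qed
  ultimately have "QRc A B C" unfolding QRc_def by blast
  then show ?thesis using legendre_gen[OF nz _ _ sc] h unfolding hypo_def by blast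
qed

lemma hasse: "hypo A B C \<Longrightarrow> glob A B C"
proof (induction "nat \<bar>A*B*C\<bar>" arbitrary: A B C rule: less_induct)
  case less
  have IH: "\<And>A' B' C'. nat \<bar>A'*B'*C'\<bar> < nat \<bar>A*B*C\<bar> \<Longrightarrow> hypo A' B' C' \<Longrightarrow> glob A' B' C'"
  proof -
    fix A' B' C' assume a: "nat \<bar>A'*B'*C'\<bar> < nat \<bar>A*B*C\<bar>" "hypo A' B' C'"
    show "glob A' B' C'" by (rule less.hyps[OF a])
  qed
  have e1: "nat \<bar>B*A*C\<bar> = nat \<bar>A*B*C\<bar>" by (simp add: ac_simps)
  have e2: "nat \<bar>C*A*B\<bar> = nat \<bar>A*B*C\<bar>" by (simp add: ac_simps)
  have e3: "nat \<bar>A*C*B\<bar> = nat \<bar>A*B*C\<bar>" by (simp add: ac_simps)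
  have e4: "nat \<bar>B*C*A\<bar> = nat \<bar>A*B*C\<bar>" by (simp add: ac_simps)
  have h: "hypo A B C" by (rule less.prems)
  have hBA: "hypo B A C" using h by (rule hypo_swap12)
  have hCA: "hypo C A B" using h by (rule hypo_swap12[OF hypo_swap23])
  have hAC: "hypo A C B" using h by (rule hypo_swap23)
  have hBC: "hypo B C A" using h by (rule hypo_swap23[OF hypo_swap12])
  show ?case
  proof (cases "\<exists>p. prime p \<and> (p^2 dvd A \<or> p^2 dvd B \<or> p^2 dvd C)")
    case True
    then obtain p where p: "prime p" "p^2 dvd A \<or> p^2 dvd B \<or> p^2 dvd C" by blast
    then consider "p^2 dvd A" | "p^2 dvd B" | "p^2 dvd C" by blast
    then show ?thesis
    proof cases
      case 1 then show ?thesis using reduce_sq[OF h p(1) _ IH] by blast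
    next
      case 2
      have "glob B A C" using reduce_sq[OF hBA p(1) 2] IH unfolding e1 by blast
      then show ?thesis by (rule glob_swap12)
    next
      case 3
      have "glob C A B" using reduce_sq[OF hCA p(1) 3] IH unfolding e2 by blast
      then show ?thesis by (rule glob_swap23[OF glob_swap12])
    qed
  next
    case nsq: False
    show ?thesis
    proof (cases "\<exists>p. prime p \<and> p dvd A \<and> p dvd B \<and> p dvd C")
      case True
      then obtain p where "prime p" "p dvd A" "p dvd B" "p dvd C" by blast
      then show ?thesis using reduce_all[OF h] IH by blast
    next
      case nall: False
      show ?thesis
      proof (cases "\<exists>p. prime p \<and> ((p dvd A \<and> p dvd B) \<or> (p dvd A \<and> p dvd C) \<or> (p dvd B \<and> p dvd C))")
        case True
        then obtain p where p: "prime p" "(p dvd A \<and> p dvd B) \<or> (p dvd A \<and> p dvd C) \<or> (p dvd B \<and> p dvd C)" by blast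
        then consider "p dvd A" "p dvd B" "\<not> p dvd C" | "p dvd A" "p dvd C" "\<not> p dvd B"
          | "p dvd B" "p dvd C" "\<not> p dvd A" using nall by blast
        then show ?thesis
        proof cases
          case 1 then show ?thesis using reduce_two[OF h p(1)] IH by blast
        next
          case 2
          have "glob A C B" using reduce_two[OF hAC p(1) 2] IH unfolding e3 by blast
          then show ?thesis by (rule glob_swap23)
        next
          case 3
          have "glob B C A" using reduce_two[OF hBC p(1) 3] IH unfolding e4 by blast
          then show ?thesis by (rule glob_swap12[OF glob_swap23])
        qed
      next
        case False
        show ?thesis by (rule hasse_noprime[OF h]) (use nsq False in blast)+
      qed
    qed
  qed
qed

lemma seq_mod1:
  assumes "padic_int_seq p x" "1 \<le> k"
  shows "[x k = x 1] (mod p)"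
  using assms(2)
proof (induction k rule: dec_induct)
  case base then show ?case by simp
next
  case (step k)
  have "[x (Suc k) = x k] (mod p^k)" using assms(1) unfolding padic_int_seq_def by blast
  moreover have "p dvd p^k" using step(1) by (simp add: dvd_power)
  ultimately have "[x (Suc k) = x k] (mod p)" by (rule cong_dvd_modulus)
  then show ?case using step(3) by (rule cong_trans)
qed

lemma seq_dvd1:
  assumes "padic_int_seq p x" "1 \<le> k"
  shows "p dvd x k \<longleftrightarrow> p dvd x 1"
  using seq_mod1[OF assms] by (simp add: cong_dvd_iff)

lemma loc_conic:
  fixes p A B C E F G :: int and T Y Z W :: "nat \<Rightarrow> int"
  assumes p: "prime p" and sf: "squarefree F"
    and sq: "padic_int_seq p T" "padic_int_seq p Y" "padic_int_seq p Z" "padic_int_seq p W"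
    and pr: "\<not>(p dvd T 1 \<and> p dvd W 1 \<and> p dvd Y 1 \<and> p dvd Z 1)"
    and e1: "\<And>K. p^K dvd (A*(T K)^2 + B*(Y K)^2 + C*(Z K)^2)"
    and e2: "\<And>K. p^K dvd (E*(T K)^2 + F*(W K)^2 + G*(Y K)^2)"
  shows "loc p A B C"
  unfolding loc_def
proof
  fix k :: nat
  define K :: nat where "K = k + 2"
  have K1: "1 \<le> K" unfolding K_def by simp
  have "p^k dvd p^K" unfolding K_def by (simp add: le_imp_power_dvd)
  then have d: "p^k dvd (A*(T K)^2 + B*(Y K)^2 + C*(Z K)^2)" using e1[of K] dvd_trans by blast
  have np: "\<not>(p dvd T K \<and> p dvd Y K \<and> p dvd Z K)"
  proof
    assume h: "p dvd T K \<and> p dvd Y K \<and> p dvd Z K"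
    then have "\<not> p dvd W K" using pr seq_dvd1[OF _ K1] sq by blast
    have "p^2 dvd p^K" unfolding K_def by (rule le_imp_power_dvd) simp
    then have "p^2 dvd (E*(T K)^2 + F*(W K)^2 + G*(Y K)^2)" using e2[of K] dvd_trans by blast
    moreover have "p^2 dvd E*(T K)^2" "p^2 dvd G*(Y K)^2" using h by (simp_all add: dvd_power_same)
    ultimately have "p^2 dvd F*(W K)^2" by (metis add.commute add.left_commute dvd_add_right_iff)
    then have "p^2 dvd F" using prime_sq_dvd_prod[OF p \<open>\<not> p dvd W K\<close>] by blast
    then have "p dvd 1" using squarefreeD[OF sf] by blast
    then show False using p by (simp add: prime_int_iff)
  qed
  show "\<exists>x y z. \<not>(p dvd x \<and> p dvd y \<and> p dvd z) \<and> p^k dvd (A*x^2 + B*y^2 + C*z^2)"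
    using d np by blast
qed

lemma sign_conic:
  fixes A B C E F G :: int and t y z w :: real
  assumes nz: "(t,y,z,w) \<noteq> (0,0,0,0)" and F0: "F \<noteq> 0"
    and e1: "of_int A * t^2 + of_int B * y^2 + of_int C * z^2 = 0"
    and e2: "of_int E * t^2 + of_int F * w^2 + of_int G * y^2 = 0"
  shows "\<not>(A>0 \<and> B>0 \<and> C>0) \<and> \<not>(A<0 \<and> B<0 \<and> C<0)"
proof -
  have key: "t = 0 \<and> y = 0 \<and> z = 0" if "A>0 \<and> B>0 \<and> C>0 \<or> A<0 \<and> B<0 \<and> C<0"
  proof -
    have "(of_int A * t^2 = 0 \<and> of_int B * y^2 = 0 \<and> of_int C * z^2 = 0)"
    proof (cases "A > 0")
      case True
      then have "B > 0" "C > 0" using that by auto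
      then have "of_int A * t^2 \<ge> (0::real)" "of_int B * y^2 \<ge> (0::real)" "of_int C * z^2 \<ge> (0::real)"
        using True by simp_all
      then show ?thesis using e1 by linarith
    next
      case False
      then have "A < 0" "B < 0" "C < 0" using that by auto
      then have "of_int A * t^2 \<le> (0::real)" "of_int B * y^2 \<le> (0::real)" "of_int C * z^2 \<le> (0::real)"
        by (simp_all add: mult_nonpos_nonneg)
      then show ?thesis using e1 by linarith
    qed
    then show ?thesis using that by auto
  qed
  show ?thesis
  proof (intro conjI notI)
    assume "A>0 \<and> B>0 \<and> C>0"
    then have "t = 0 \<and> y = 0 \<and> z = 0" using key by blast
    then have "w = 0" using e2 F0 by simp
    then show False using nz \<open>t = 0 \<and> y = 0 \<and> z = 0\<close> by simp
  next
    assume "A<0 \<and> B<0 \<and> C<0"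
    then have "t = 0 \<and> y = 0 \<and> z = 0" using key by blast
    then have "w = 0" using e2 F0 by simp
    then show False using nz \<open>t = 0 \<and> y = 0 \<and> z = 0\<close> by simp
  qed
qed

lemma conic_hypo:
  fixes A B C E F G :: int
  assumes nz: "A \<noteq> 0" "B \<noteq> 0" "C \<noteq> 0" "F \<noteq> 0" and sf: "squarefree F"
    and re: "\<exists>t y z w::real. (t,y,z,w) \<noteq> (0,0,0,0) \<and> of_int A * t^2 + of_int B * y^2 + of_int C * z^2 = 0
              \<and> of_int E * t^2 + of_int F * w^2 + of_int G * y^2 = 0"
    and pa: "\<And>p. prime p \<Longrightarrow> p \<noteq> 2 \<Longrightarrow> (\<exists>T Y Z W. padic_int_seq p T \<and> padic_int_seq p Y \<and> padic_int_seq p Z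
              \<and> padic_int_seq p W \<and> \<not>(p dvd T 1 \<and> p dvd W 1 \<and> p dvd Y 1 \<and> p dvd Z 1)
              \<and> (\<forall>K. p^K dvd (A*(T K)^2 + B*(Y K)^2 + C*(Z K)^2))
              \<and> (\<forall>K. p^K dvd (E*(T K)^2 + F*(W K)^2 + G*(Y K)^2)))"
  shows "glob A B C"
proof (rule hasse)
  obtain t y z w :: real where r: "(t,y,z,w) \<noteq> (0,0,0,0)" "of_int A * t^2 + of_int B * y^2 + of_int C * z^2 = 0"
    "of_int E * t^2 + of_int F * w^2 + of_int G * y^2 = 0" using re by blast
  have s: "\<not>(A>0 \<and> B>0 \<and> C>0) \<and> \<not>(A<0 \<and> B<0 \<and> C<0)" by (rule sign_conic[OF r(1) nz(4) r(2,3)])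
  have l: "loc p A B C" if pp: "prime p" "p \<noteq> 2" for p
  proof -
    obtain T Y Z W where h: "padic_int_seq p T" "padic_int_seq p Y" "padic_int_seq p Z"
      "padic_int_seq p W" "\<not>(p dvd T 1 \<and> p dvd W 1 \<and> p dvd Y 1 \<and> p dvd Z 1)"
      "\<forall>K. p^K dvd (A*(T K)^2 + B*(Y K)^2 + C*(Z K)^2)"
      "\<forall>K. p^K dvd (E*(T K)^2 + F*(W K)^2 + G*(Y K)^2)" using pa[OF pp] by blast
    show ?thesis by (rule loc_conic[OF pp(1) sf h(1-5)]) (use h(6,7) in blast)+
  qed
  show "hypo A B C" unfolding hypo_def using nz s l by blast
qed

theorem lemma3p2:
  fixes e1 e2 e3 n d1 d2 d3 :: int
  assumes "e1 \<noteq> 0" and "e2 \<noteq> 0" and "e3 \<noteq> 0"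
    and "e1 + e2 + e3 = 0"
    and "odd e1" and "odd e2" and "2 dvd e3" and "\<not> 4 dvd e3"
    and "n > 0" and "odd n" and "squarefree n"
    and "odd d1" and "odd d2" and "odd d3"
    and "squarefree d1" and "squarefree d2" and "squarefree d3"
    and "d1 dvd e1 * e2 * e3 * n" and "d2 dvd e1 * e2 * e3 * n" and "d3 dvd e1 * e2 * e3 * n"
    and "\<exists>s::int. d1 * d2 * d3 = s ^ 2"
    and "D_has_real_point e1 e2 e3 n d1 d2 d3"
    and "\<forall>p::int. prime p \<and> p \<noteq> 2 \<longrightarrow> D_has_padic_point p e1 e2 e3 n d1 d2 d3"
  shows "D_has_padic_point 2 e1 e2 e3 n d1 d2 d3"
proof -
  note as = assms
  define a where "a = e1*n"
  define b where "b = e2*n"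
  define c where "c = e3*n"
  have abc: "a + b + c = 0" using as(4) unfolding a_def b_def c_def by (metis distrib_right mult_zero_left)
  have oa: "odd a" "odd b" using as(5,6,10) unfolding a_def b_def by simp_all
  have c4: "c mod 4 = 2"
  proof -
    obtain k where k: "e3 = 2*k" using as(7) by blast
    have "odd k" using k as(8) by auto
    then have "odd (k*n)" using as(10) by simp
    moreover have "\<forall>m::int. odd m \<longrightarrow> (2*m) mod 4 = 2" by presburger
    ultimately have "(2*(k*n)) mod 4 = 2" by blast
    then show ?thesis unfolding c_def k by (simp add: mult.assoc)
  qed
  have nz: "a \<noteq> 0" "b \<noteq> 0" "c \<noteq> 0" "d1 \<noteq> 0" "d2 \<noteq> 0" "d3 \<noteq> 0"
    using as(1,2,3,9,12,13,14) unfolding a_def b_def c_def by auto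
  obtain tr u1r u2r u3r :: real where rp: "(tr, u1r, u2r, u3r) \<noteq> (0,0,0,0)"
    "D_eq1 e1 e2 e3 n d1 d2 d3 tr u1r u2r u3r = 0" "D_eq2 e1 e2 e3 n d1 d2 d3 tr u1r u2r u3r = 0"
    "D_eq3 e1 e2 e3 n d1 d2 d3 tr u1r u2r u3r = 0"
    using as(22) unfolding D_has_real_point_def by blast
  have r1: "of_int a * tr^2 + of_int d2 * u2r^2 + of_int (-d3) * u3r^2 = 0"
    using rp(2) unfolding D_eq1_def a_def by simp
  have r2: "of_int b * tr^2 + of_int d3 * u3r^2 + of_int (-d1) * u1r^2 = 0"
    using rp(3) unfolding D_eq2_def b_def by simp
  have r3: "of_int c * tr^2 + of_int d1 * u1r^2 + of_int (-d2) * u2r^2 = 0"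
    using rp(4) unfolding D_eq3_def c_def by simp
  have pp: "\<exists>t u1 u2 u3. padic_int_seq p t \<and> padic_int_seq p u1 \<and> padic_int_seq p u2 \<and> padic_int_seq p u3 \<and>
        \<not> (p dvd t 1 \<and> p dvd u1 1 \<and> p dvd u2 1 \<and> p dvd u3 1) \<and>
        (\<forall>k. p^k dvd (a*(t k)^2 + d2*(u2 k)^2 + (-d3)*(u3 k)^2) \<and>
             p^k dvd (b*(t k)^2 + d3*(u3 k)^2 + (-d1)*(u1 k)^2) \<and>
             p^k dvd (c*(t k)^2 + d1*(u1 k)^2 + (-d2)*(u2 k)^2))"
    if "prime p" "p \<noteq> 2" for p
  proof -
    have "D_has_padic_point p e1 e2 e3 n d1 d2 d3" using as(23) that by blast
    then obtain t u1 u2 u3 where h: "padic_int_seq p t" "padic_int_seq p u1" "padic_int_seq p u2" "padic_int_seq p u3"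
        "\<not> (p dvd t 1 \<and> p dvd u1 1 \<and> p dvd u2 1 \<and> p dvd u3 1)"
        "\<forall>k. [D_eq1 e1 e2 e3 n d1 d2 d3 (t k) (u1 k) (u2 k) (u3 k) = 0] (mod p ^ k) \<and>
             [D_eq2 e1 e2 e3 n d1 d2 d3 (t k) (u1 k) (u2 k) (u3 k) = 0] (mod p ^ k) \<and>
             [D_eq3 e1 e2 e3 n d1 d2 d3 (t k) (u1 k) (u2 k) (u3 k) = 0] (mod p ^ k)"
      unfolding D_has_padic_point_def by blast
    have "\<forall>k. p^k dvd (a*(t k)^2 + d2*(u2 k)^2 + (-d3)*(u3 k)^2) \<and>
             p^k dvd (b*(t k)^2 + d3*(u3 k)^2 + (-d1)*(u1 k)^2) \<and>
             p^k dvd (c*(t k)^2 + d1*(u1 k)^2 + (-d2)*(u2 k)^2)"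
      using h(6) unfolding D_eq1_def D_eq2_def D_eq3_def a_def b_def c_def cong_0_iff by simp
    then show ?thesis using h(1-5) by blast
  qed
  have g1: "glob a d2 (-d3)"
  proof (rule conic_hypo[where E=c and F=d1 and G="-d2"])
    show "a \<noteq> 0" "d2 \<noteq> 0" "-d3 \<noteq> 0" "d1 \<noteq> 0" using nz by auto
    show "squarefree d1" by (rule as(15))
    show "\<exists>t y z w::real. (t,y,z,w) \<noteq> (0,0,0,0) \<and> of_int a * t^2 + of_int d2 * y^2 + of_int (-d3) * z^2 = 0
              \<and> of_int c * t^2 + of_int d1 * w^2 + of_int (-d2) * y^2 = 0"
      using rp(1) r1 r3 by (intro exI[of _ tr] exI[of _ u2r] exI[of _ u3r] exI[of _ u1r]) auto
    fix p :: int assume p: "prime p" "p \<noteq> 2"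
    obtain t u1 u2 u3 where h: "padic_int_seq p t" "padic_int_seq p u1" "padic_int_seq p u2" "padic_int_seq p u3"
        "\<not> (p dvd t 1 \<and> p dvd u1 1 \<and> p dvd u2 1 \<and> p dvd u3 1)"
        "\<forall>k. p^k dvd (a*(t k)^2 + d2*(u2 k)^2 + (-d3)*(u3 k)^2) \<and>
             p^k dvd (b*(t k)^2 + d3*(u3 k)^2 + (-d1)*(u1 k)^2) \<and>
             p^k dvd (c*(t k)^2 + d1*(u1 k)^2 + (-d2)*(u2 k)^2)" using pp[OF p] by blast
    show "\<exists>T Y Z W. padic_int_seq p T \<and> padic_int_seq p Y \<and> padic_int_seq p Z
              \<and> padic_int_seq p W \<and> \<not>(p dvd T 1 \<and> p dvd W 1 \<and> p dvd Y 1 \<and> p dvd Z 1)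
              \<and> (\<forall>K. p^K dvd (a*(T K)^2 + d2*(Y K)^2 + (-d3)*(Z K)^2))
              \<and> (\<forall>K. p^K dvd (c*(T K)^2 + d1*(W K)^2 + (-d2)*(Y K)^2))"
      by (rule exI[of _ t], rule exI[of _ u2], rule exI[of _ u3], rule exI[of _ u1]) (use h in blast)
  qed
  have g2: "glob b d3 (-d1)"
  proof (rule conic_hypo[where E=a and F=d2 and G="-d3"])
    show "b \<noteq> 0" "d3 \<noteq> 0" "-d1 \<noteq> 0" "d2 \<noteq> 0" using nz by auto
    show "squarefree d2" by (rule as(16))
    show "\<exists>t y z w::real. (t,y,z,w) \<noteq> (0,0,0,0) \<and> of_int b * t^2 + of_int d3 * y^2 + of_int (-d1) * z^2 = 0
              \<and> of_int a * t^2 + of_int d2 * w^2 + of_int (-d3) * y^2 = 0"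
      using rp(1) r1 r2 by (intro exI[of _ tr] exI[of _ u3r] exI[of _ u1r] exI[of _ u2r]) auto
    fix p :: int assume p: "prime p" "p \<noteq> 2"
    obtain t u1 u2 u3 where h: "padic_int_seq p t" "padic_int_seq p u1" "padic_int_seq p u2" "padic_int_seq p u3"
        "\<not> (p dvd t 1 \<and> p dvd u1 1 \<and> p dvd u2 1 \<and> p dvd u3 1)"
        "\<forall>k. p^k dvd (a*(t k)^2 + d2*(u2 k)^2 + (-d3)*(u3 k)^2) \<and>
             p^k dvd (b*(t k)^2 + d3*(u3 k)^2 + (-d1)*(u1 k)^2) \<and>
             p^k dvd (c*(t k)^2 + d1*(u1 k)^2 + (-d2)*(u2 k)^2)" using pp[OF p] by blast
    show "\<exists>T Y Z W. padic_int_seq p T \<and> padic_int_seq p Y \<and> padic_int_seq p Z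
              \<and> padic_int_seq p W \<and> \<not>(p dvd T 1 \<and> p dvd W 1 \<and> p dvd Y 1 \<and> p dvd Z 1)
              \<and> (\<forall>K. p^K dvd (b*(T K)^2 + d3*(Y K)^2 + (-d1)*(Z K)^2))
              \<and> (\<forall>K. p^K dvd (a*(T K)^2 + d2*(W K)^2 + (-d3)*(Y K)^2))"
      by (rule exI[of _ t], rule exI[of _ u3], rule exI[of _ u1], rule exI[of _ u2]) (use h in blast)
  qed
  have g3: "glob c d1 (-d2)"
  proof (rule conic_hypo[where E=b and F=d3 and G="-d1"])
    show "c \<noteq> 0" "d1 \<noteq> 0" "-d2 \<noteq> 0" "d3 \<noteq> 0" using nz by auto
    show "squarefree d3" by (rule as(17))
    show "\<exists>t y z w::real. (t,y,z,w) \<noteq> (0,0,0,0) \<and> of_int c * t^2 + of_int d1 * y^2 + of_int (-d2) * z^2 = 0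
              \<and> of_int b * t^2 + of_int d3 * w^2 + of_int (-d1) * y^2 = 0"
      using rp(1) r2 r3 by (intro exI[of _ tr] exI[of _ u1r] exI[of _ u2r] exI[of _ u3r]) auto
    fix p :: int assume p: "prime p" "p \<noteq> 2"
    obtain t u1 u2 u3 where h: "padic_int_seq p t" "padic_int_seq p u1" "padic_int_seq p u2" "padic_int_seq p u3"
        "\<not> (p dvd t 1 \<and> p dvd u1 1 \<and> p dvd u2 1 \<and> p dvd u3 1)"
        "\<forall>k. p^k dvd (a*(t k)^2 + d2*(u2 k)^2 + (-d3)*(u3 k)^2) \<and>
             p^k dvd (b*(t k)^2 + d3*(u3 k)^2 + (-d1)*(u1 k)^2) \<and>
             p^k dvd (c*(t k)^2 + d1*(u1 k)^2 + (-d2)*(u2 k)^2)" using pp[OF p] by blast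
    show "\<exists>T Y Z W. padic_int_seq p T \<and> padic_int_seq p Y \<and> padic_int_seq p Z
              \<and> padic_int_seq p W \<and> \<not>(p dvd T 1 \<and> p dvd W 1 \<and> p dvd Y 1 \<and> p dvd Z 1)
              \<and> (\<forall>K. p^K dvd (c*(T K)^2 + d1*(Y K)^2 + (-d2)*(Z K)^2))
              \<and> (\<forall>K. p^K dvd (b*(T K)^2 + d3*(W K)^2 + (-d1)*(Y K)^2))"
      by (rule exI[of _ t], rule exI[of _ u1], rule exI[of _ u2], rule exI[of _ u3]) (use h in blast)
  qed
  obtain x y z where s1: "(x,y,z) \<noteq> (0,0,0)" "a*x^2 + d2*y^2 + (-d3)*z^2 = 0" using g1 unfolding glob_def by blast
  have C1: "4 dvd (a + d2) \<or> 4 dvd (d2 + -d3) \<or> 4 dvd (a + -d3)"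
    by (rule conic_odd[OF oa(1) as(13) _ s1]) (use as(14) in simp)
  obtain x y z where s2: "(x,y,z) \<noteq> (0,0,0)" "b*x^2 + d3*y^2 + (-d1)*z^2 = 0" using g2 unfolding glob_def by blast
  have C2: "4 dvd (b + d3) \<or> 4 dvd (d3 + -d1) \<or> 4 dvd (b + -d1)"
    by (rule conic_odd[OF oa(2) as(14) _ s2]) (use as(12) in simp)
  obtain x y z where s3: "(x,y,z) \<noteq> (0,0,0)" "c*x^2 + d1*y^2 + (-d2)*z^2 = 0" using g3 unfolding glob_def by blast
  have s3': "(y,z,x) \<noteq> (0,0,0)" "d1*y^2 + (-d2)*z^2 + c*x^2 = 0" using s3 by auto
  have C3: "8 dvd (d1 + -d2) \<or> 8 dvd (d1 + -d2 + c)"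
    by (rule conic_even[OF as(12) _ c4 s3']) (use as(13) in simp)
  have pr8: "(d1*d2*d3) mod 8 = 1"
  proof -
    obtain s where s: "d1*d2*d3 = s^2" using as(21) by blast
    have "odd (d1*d2*d3)" using as(12,13,14) by simp
    then have "odd s" using s by simp
    then have "8 dvd (s^2 - 1)" by (rule sq_odd8)
    then obtain q where "s^2 - 1 = 8*q" by blast
    then have "d1*d2*d3 = 1 + 8*q" using s by simp
    then show ?thesis by simp
  qed
  have "(8 dvd (d1 - d2) \<and> 4 dvd (d3 - d1)) \<or> (8 dvd (d2 + a - d1 + b) \<and> 4 dvd (d2 + a))"
  proof (rule comb[OF as(12,13,14) oa pr8])
    show "\<not> 4 dvd (a + b)" using c4 abc by presburger
    show "4 dvd (d2 - d3) \<or> 4 dvd (a + d2) \<or> 4 dvd (a - d3)" using C1 by auto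
    show "4 dvd (d3 - d1) \<or> 4 dvd (b + d3) \<or> 4 dvd (b - d1)" using C2 by auto
    have C3': "8 dvd (d1 - d2) \<or> 8 dvd (d1 - d2 + c)" using C3 by simp
    have e: "d1 - d2 + c = d1 - d2 - a - b" using abc by simp
    show "8 dvd (d1 - d2) \<or> 8 dvd (d1 - d2 - a - b)" using C3' unfolding e .
  qed
  then show ?thesis
  proof
    assume "8 dvd (d1 - d2) \<and> 4 dvd (d3 - d1)"
    then show ?thesis using P1_point[OF as(12,13)] oa abc unfolding a_def b_def c_def by blast
  next
    assume "8 dvd (d2 + a - d1 + b) \<and> 4 dvd (d2 + a)"
    then show ?thesis using P2_point[OF as(12,13,14)] oa abc unfolding a_def b_def c_def by blast
  qed
qed

end
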